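(* Let $\phi\in\mathcal{BF}$ with $a=b=0$ in its representation, and set $\beta:=-\omega_0^{\phi'}\ge0$. If for every $a>-\beta$ the function $h_a(\lambda):=\phi_e(\lambda+a)-\phi_e(a)$, $\lambda>0$, belongs to $\mathcal{CBF}$, then the L\'evy measure of $\phi$ has a density $\mu(t)$ such that $t\mapsto e^{\beta t}\mu(t)$ is completely monotone on $(0,\infty)$.
   Context: A function $f:(0,\infty)\to\mathbb{R}$ is completely monotone ($f\in\mathcal{CM}$) if it is $C^\infty$ and $(-1)^n f^{(n)}\ge0$ for all $n\ge0$. A function $\phi:(0,\infty)\to[0,\infty)$ is a Bernstein function, $\phi\in\mathcal{BF}$, if it is $C^\infty$ and $(-1)^{n-1}\phi^{(n)}(\lambda)\ge0$ for all $n\in\mathbb{N}$, $\lambda>0$; it has a unique representation $\phi(\lambda)=a+b\lambda+\int_{(0,\infty)}(1-e^{-\lambda t})\mu(dt)$ with $a,b\ge0$ and a measure $\mu$ on $(0,\infty)$ with $\int(1\wedge t)\mu(dt)<\infty$ (the L\'evy measure). $\mathcal{CBF}$ (complete Bernstein functions) is the set of $\phi\in\mathcal{BF}$ whose L\'evy measure has a completely monotone density. For completely monotone $f$, with $f^{(n)}(0+):=\lim_{\lambda\to0+}f^{(n)}(\lambda)\in[-\infty,\infty]$: if all are finite, $\omega_0^f:=\inf\{\lambda:\sum_{n\ge0}\frac{f^{(n)}(0+)}{n!}\lambda^n\text{ converges}\}$, otherwise $\omega_0^f:=0$. With $\beta:=-\omega_0^{\phi'}$, the extension $\phi_e:(-\beta,\infty)\to\mathbb{R}$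 equals $\phi$ on $(0,\infty)$ and, if $\beta>0$, $\phi_e(\lambda)=\sum_{n\ge0}\frac{\phi^{(n)}(0+)}{n!}\lambda^n$ on $(-\beta,0]$. *)

theory Defs
  imports "HOL-Analysis.Analysis"
begin

definition smooth_pos :: "(real \<Rightarrow> real) \<Rightarrow> bool" where
  "smooth_pos f \<longleftrightarrow> (\<forall>n. \<forall>x>0. (deriv ^^ n) f differentiable (at x))"

definition completely_monotone :: "(real \<Rightarrow> real) \<Rightarrow> bool" where
  "completely_monotone f \<longleftrightarrow> smooth_pos f \<and>
     (\<forall>n. \<forall>x>0. (-1) ^ n * (deriv ^^ n) f x \<ge> 0)"

definition bernstein :: "(real \<Rightarrow> real) \<Rightarrow> bool" where
  "bernstein f \<longleftrightarrow> smooth_pos f \<and> (\<forall>x>0. f x \<ge> 0) \<and>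
     (\<forall>n\<ge>1. \<forall>x>0. (-1) ^ (n - 1) * (deriv ^^ n) f x \<ge> 0)"

text \<open>Levy--Khintchine triple: phi(l) = a + b l + int (1 - exp(-l t)) mu(dt),
  with mu a measure on (0,oo) (a Borel measure on the reals giving no mass
  to (-oo,0]) and int (1 min t) mu(dt) < oo.\<close>
definition levy_triple :: "(real \<Rightarrow> real) \<Rightarrow> real \<Rightarrow> real \<Rightarrow> real measure \<Rightarrow> bool" where
  "levy_triple f a b \<mu> \<longleftrightarrow> a \<ge> 0 \<and> b \<ge> 0 \<and> sets \<mu> = sets borel \<and>
     emeasure \<mu> {..0} = 0 \<and>
     (\<integral>\<^sup>+ t. ennreal (min 1 t) \<partial>\<mu>) < \<infinity> \<and>
     (\<forall>l>0. f l = a + b * l + (\<integral> t. (1 - exp (- l * t)) \<partial>\<mu>))"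

definition has_density_on_pos :: "real measure \<Rightarrow> (real \<Rightarrow> real) \<Rightarrow> bool" where
  "has_density_on_pos \<mu> g \<longleftrightarrow> g \<in> borel_measurable borel \<and> (\<forall>t>0. g t \<ge> 0) \<and>
     \<mu> = density lborel (\<lambda>t. ennreal (indicator {0<..} t * g t))"

definition complete_bernstein :: "(real \<Rightarrow> real) \<Rightarrow> bool" where
  "complete_bernstein f \<longleftrightarrow> bernstein f \<and>
     (\<exists>a b \<mu> m. levy_triple f a b \<mu> \<and> has_density_on_pos \<mu> m \<and> completely_monotone m)"

definition deriv_at_0plus :: "(real \<Rightarrow> real) \<Rightarrow> nat \<Rightarrow> ereal" where
  "deriv_at_0plus f n = Lim (at_right 0) (\<lambda>x. ereal ((deriv ^^ n) f x))"

definition omega0 :: "(real \<Rightarrow> real) \<Rightarrow> ereal" where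
  "omega0 f = (if (\<forall>n. \<bar>deriv_at_0plus f n\<bar> \<noteq> \<infinity>)
     then Inf {ereal l | l. summable (\<lambda>n. real_of_ereal (deriv_at_0plus f n) / fact n * l ^ n)}
     else 0)"

text \<open>The extension phi_e: phi on (0,oo), the Taylor series at 0+ on (-beta,0]
  (only used on (-beta,oo), and on (-beta,0] only when beta > 0).\<close>
definition phi_ext :: "(real \<Rightarrow> real) \<Rightarrow> real \<Rightarrow> real" where
  "phi_ext f l = (if 0 < l then f l
     else (\<Sum>n. real_of_ereal (deriv_at_0plus f n) / fact n * l ^ n))"

end

theory Submission
  imports Defs "HOL-Probability.Distribution_Functions"
begin

lemma deriv_funpow_cong:
  fixes f g :: "real \<Rightarrow> real"
  assumes "\<And>x. x > 0 \<Longrightarrow> f x = g x"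
  shows "y > 0 \<Longrightarrow> (deriv ^^ n) f y = (deriv ^^ n) g y"
proof (induction n arbitrary: y)
  case 0 then show ?case using assms by simp
next
  case (Suc n)
  have ev: "eventually (\<lambda>z. (deriv ^^ n) f z = (deriv ^^ n) g z) (nhds y)"
    using eventually_nhds_in_open[of "{0<..}" y] Suc by (auto elim!: eventually_mono)
  have "(deriv ^^ Suc n) f y = deriv ((deriv ^^ n) f) y" by simp
  also have "\<dots> = deriv ((deriv ^^ n) g) y" by (rule deriv_cong_ev[OF ev refl])
  also have "\<dots> = (deriv ^^ Suc n) g y" by simp
  finally show ?case .
qed

lemma differentiable_cong_pos:
  fixes f g :: "real \<Rightarrow> real"
  assumes "\<And>x. x > 0 \<Longrightarrow> f x = g x" "y > 0" "f differentiable (at y)"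
  shows "g differentiable (at y)"
proof -
  from assms(3) obtain D where "(f has_field_derivative D) (at y)"
    using real_differentiable_def by blast
  then have "(g has_field_derivative D) (at y)"
    by (rule has_field_derivative_transform_within_open[of _ _ _ "{0<..}"]) (use assms in auto)
  then show ?thesis using real_differentiable_def by blast
qed

lemma smooth_pos_cong:
  assumes "\<And>x. x > 0 \<Longrightarrow> f x = g x" "smooth_pos f"
  shows "smooth_pos g"
  unfolding smooth_pos_def
proof (intro allI impI)
  fix n and y :: real assume y: "y > 0"
  have "(deriv ^^ n) f differentiable (at y)" using assms(2) y by (auto simp: smooth_pos_def)
  moreover have "\<And>x. x > 0 \<Longrightarrow> (deriv ^^ n) f x = (deriv ^^ n) g x"
    using deriv_funpow_cong[of f g] assms(1) by blast
  ultimately show "(deriv ^^ n) g differentiable (at y)"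
    using differentiable_cong_pos[of "(deriv ^^ n) f" "(deriv ^^ n) g" y] y by blast
qed

lemma cm_cong:
  assumes "\<And>x. x > 0 \<Longrightarrow> f x = g x" "completely_monotone f"
  shows "completely_monotone g"
  unfolding completely_monotone_def
proof (intro conjI allI impI)
  show "smooth_pos g" using smooth_pos_cong[OF assms(1)] assms(2) by (auto simp: completely_monotone_def)
  fix n and y :: real assume "y > 0"
  then have "(deriv ^^ n) f y = (deriv ^^ n) g y"
    using deriv_funpow_cong[of f g] assms(1) by blast
  moreover have "0 \<le> (-1) ^ n * (deriv ^^ n) f y"
    using assms(2) \<open>y > 0\<close> unfolding completely_monotone_def by blast
  ultimately show "0 \<le> (-1) ^ n * (deriv ^^ n) g y" by simp
qed


lemma pascal_sum:
  fixes c :: real and D :: "nat \<Rightarrow> real"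
  shows "c * (\<Sum>k\<le>n. real (n choose k) * c^(n-k) * D k) + (\<Sum>k\<le>n. real (n choose k) * c^(n-k) * D (Suc k))
       = (\<Sum>k\<le>Suc n. real (Suc n choose k) * c^(Suc n-k) * D k)"
proof -
  have A: "c * (\<Sum>k\<le>n. real (n choose k) * c^(n-k) * D k) = (\<Sum>k\<le>n. real (n choose k) * c^(Suc n-k) * D k)"
    by (simp add: sum_distrib_left Suc_diff_le mult_ac)
  have B: "(\<Sum>k\<le>n. real (n choose k) * c^(n-k) * D (Suc k)) = (\<Sum>k\<le>Suc n. real (n choose (k - 1)) * c^(Suc n-k) * (if k = 0 then 0 else D k))"
    by (subst sum.atMost_Suc_shift) simp
  have C: "(\<Sum>k\<le>n. real (n choose k) * c^(Suc n-k) * D k) = (\<Sum>k\<le>Suc n. real (n choose k) * c^(Suc n-k) * D k)"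
    by simp
  have E: "(\<Sum>k\<le>Suc n. real (Suc n choose k) * c^(Suc n-k) * D k) =
     (\<Sum>k\<le>Suc n. real (n choose k) * c^(Suc n-k) * D k + real (n choose (k - 1)) * c^(Suc n-k) * (if k = 0 then 0 else D k))"
  proof (rule sum.cong[OF refl])
    fix k assume "k \<in> {..Suc n}"
    show "real (Suc n choose k) * c^(Suc n-k) * D k = real (n choose k) * c^(Suc n-k) * D k + real (n choose (k - 1)) * c^(Suc n-k) * (if k = 0 then 0 else D k)"
    proof (cases k)
      case 0 then show ?thesis by simp
    next
      case (Suc j) then show ?thesis by (simp add: algebra_simps)
    qed
  qed
  show ?thesis unfolding A B C E sum.distrib ..
qed

lemma S_deriv:
  fixes f :: "real \<Rightarrow> real" and c :: real
  assumes sm: "smooth_pos f" and x: "x > 0"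
  shows "((\<lambda>y. exp (c*y) * (\<Sum>k\<le>n. real (n choose k) * c^(n-k) * (deriv^^k) f y)) has_field_derivative
        (c * exp (c*x)) * (\<Sum>k\<le>n. real (n choose k) * c^(n-k) * (deriv^^k) f x)
        + exp (c*x) * (\<Sum>k\<le>n. real (n choose k) * c^(n-k) * (deriv^^Suc k) f x)) (at x)"
proof -
  have dk: "((deriv^^k) f has_field_derivative (deriv^^Suc k) f x) (at x)" for k
    using sm x unfolding smooth_pos_def by (simp add: DERIV_deriv_iff_real_differentiable)
  have e: "((\<lambda>y. exp (c*y)) has_field_derivative c*exp(c*x)) (at x)"
    by (auto intro!: derivative_eq_intros)
  have s: "((\<lambda>y. (\<Sum>k\<le>n. real (n choose k) * c^(n-k) * (deriv^^k) f y)) has_field_derivative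
      (\<Sum>k\<le>n. real (n choose k) * c^(n-k) * (deriv^^Suc k) f x)) (at x)"
    by (rule DERIV_sum) (rule DERIV_cmult, rule dk)
  show ?thesis using DERIV_mult[OF e s] by (simp add: algebra_simps)
qed

lemma leibniz_exp:
  fixes f :: "real \<Rightarrow> real" and c :: real
  assumes sm: "smooth_pos f"
  shows "x > 0 \<Longrightarrow> (deriv ^^ n) (\<lambda>t. exp (c*t) * f t) x
     = exp (c*x) * (\<Sum>k\<le>n. real (n choose k) * c^(n-k) * (deriv^^k) f x)"
proof (induction n arbitrary: x)
  case 0 then show ?case by simp
next
  case (Suc n)
  define S where "S = (\<lambda>y. exp (c*y) * (\<Sum>k\<le>n. real (n choose k) * c^(n-k) * (deriv^^k) f y))"
  have ev: "eventually (\<lambda>z. (deriv ^^ n) (\<lambda>t. exp (c*t) * f t) z = S z) (nhds x)"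
    using eventually_nhds_in_open[of "{0<..}" x] Suc by (auto elim!: eventually_mono simp: S_def)
  have "(S has_field_derivative (c * exp (c*x)) * (\<Sum>k\<le>n. real (n choose k) * c^(n-k) * (deriv^^k) f x)
        + exp (c*x) * (\<Sum>k\<le>n. real (n choose k) * c^(n-k) * (deriv^^Suc k) f x)) (at x)"
    unfolding S_def by (rule S_deriv[OF sm Suc.prems])
  then have "deriv S x = exp (c*x) * (c * (\<Sum>k\<le>n. real (n choose k) * c^(n-k) * (deriv^^k) f x)
        + (\<Sum>k\<le>n. real (n choose k) * c^(n-k) * (deriv^^Suc k) f x))"
    by (intro DERIV_imp_deriv) (simp add: algebra_simps)
  also have "\<dots> = exp (c*x) * (\<Sum>k\<le>Suc n. real (Suc n choose k) * c^(Suc n-k) * (deriv^^k) f x)"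
    using pascal_sum[of c n "\<lambda>k. (deriv^^k) f x"] by simp
  finally have 1: "deriv S x = \<dots>" .
  have "(deriv ^^ Suc n) (\<lambda>t. exp (c*t) * f t) x = deriv ((deriv ^^ n) (\<lambda>t. exp (c*t) * f t)) x" by simp
  also have "\<dots> = deriv S x" by (rule deriv_cong_ev[OF ev refl])
  finally show ?case using 1 by simp
qed

lemma smooth_pos_exp_mult:
  fixes f :: "real \<Rightarrow> real" and c :: real
  assumes sm: "smooth_pos f"
  shows "smooth_pos (\<lambda>t. exp (c*t) * f t)"
  unfolding smooth_pos_def
proof (intro allI impI)
  fix n and x :: real assume x: "x > 0"
  define S where "S = (\<lambda>y. exp (c*y) * (\<Sum>k\<le>n. real (n choose k) * c^(n-k) * (deriv^^k) f y))"
  have "S differentiable (at x)"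
    unfolding S_def using S_deriv[OF sm x] real_differentiable_def by blast
  then show "(deriv ^^ n) (\<lambda>t. exp (c * t) * f t) differentiable at x"
    by (rule differentiable_cong_pos[rotated 2]) (use leibniz_exp[OF sm] x in \<open>auto simp: S_def\<close>)
qed


lemma sum_binom_zero:
  fixes D :: "nat \<Rightarrow> real"
  shows "(\<Sum>k\<le>n. real (n choose k) * (0::real)^(n-k) * D k) = D n"
proof -
  have "(\<Sum>k\<le>n. real (n choose k) * (0::real)^(n-k) * D k) = (\<Sum>k\<le>n. if k = n then D k else 0)"
    by (rule sum.cong) auto
  then show ?thesis by simp
qed

lemma cm_limit:
  fixes G :: "real \<Rightarrow> real"
  assumes sm: "smooth_pos G" and d: "\<delta> > 0"
    and cm: "\<And>e. 0 < e \<Longrightarrow> e < \<delta> \<Longrightarrow> completely_monotone (\<lambda>t. exp ((-e)*t) * G t)"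
  shows "completely_monotone G"
  unfolding completely_monotone_def
proof (intro conjI sm allI impI)
  fix n and x :: real assume x: "x > 0"
  define F where "F = (\<lambda>e::real. (-1)^n * (exp ((-e)*x) * (\<Sum>k\<le>n. real (n choose k) * (-e)^(n-k) * (deriv^^k) G x)))"
  have "(F \<longlongrightarrow> F 0) (at_right 0)"
    unfolding F_def by (intro tendsto_intros)
  moreover have "eventually (\<lambda>e. 0 \<le> F e) (at_right 0)"
  proof -
    have "eventually (\<lambda>e. 0 < e \<and> e < \<delta>) (at_right (0::real))"
      using eventually_at_right_real[OF d] by auto
    then show ?thesis
    proof (rule eventually_mono)
      fix e :: real assume e: "0 < e \<and> e < \<delta>"
      have "0 \<le> (-1)^n * (deriv ^^ n) (\<lambda>t. exp ((-e)*t) * G t) x"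
        using cm[of e] e x unfolding completely_monotone_def by blast
      also have "(deriv ^^ n) (\<lambda>t. exp ((-e)*t) * G t) x = exp ((-e)*x) * (\<Sum>k\<le>n. real (n choose k) * (-e)^(n-k) * (deriv^^k) G x)"
        by (rule leibniz_exp[OF sm x])
      finally show "0 \<le> F e" by (simp add: F_def)
    qed
  qed
  ultimately have "0 \<le> F 0"
    by (intro tendsto_lowerbound[of F "F 0" "at_right 0" 0]) auto
  then show "0 \<le> (-1)^n * (deriv ^^ n) G x"
    unfolding F_def using sum_binom_zero[of n "\<lambda>k. (deriv^^k) G x"] by simp
qed


lemma AE_pos_of_null:
  assumes "emeasure M {..0::real} = 0" "sets M = sets borel"
  shows "AE t in M. t > 0"
  by (rule AE_I[of _ _ "{..0}"]) (use assms in \<open>auto\<close>)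

lemma poly_moment_eq:
  fixes \<rho>1 \<rho>2 :: "real measure"
  assumes f1: "finite_measure \<rho>1" and f2: "finite_measure \<rho>2"
    and s1: "sets \<rho>1 = sets borel" and s2: "sets \<rho>2 = sets borel"
    and z1: "emeasure \<rho>1 {..0} = 0" and z2: "emeasure \<rho>2 {..0} = 0"
    and mom: "\<And>n::nat. (\<integral>t. exp (- (real n + 1) * t) \<partial>\<rho>1) = (\<integral>t. exp (- (real n + 1) * t) \<partial>\<rho>2)"
  shows "(\<integral>t. (\<Sum>i\<le>N. a i * exp (-t) ^ i) * exp (-t) \<partial>\<rho>1) = (\<integral>t. (\<Sum>i\<le>N. a i * exp (-t) ^ i) * exp (-t) \<partial>\<rho>2)"
proof -
  have int: "integrable \<rho> (\<lambda>t. exp (- (real n + 1) * t))"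
    if "finite_measure \<rho>" "sets \<rho> = sets borel" "emeasure \<rho> {..0} = 0" for \<rho> n
  proof -
    interpret finite_measure \<rho> by fact
    have "AE t in \<rho>. norm (exp (- (real n + 1) * t)) \<le> 1"
      using AE_pos_of_null[OF that(3,2)] by eventually_elim (auto simp: mult_nonpos_nonneg)
    then show ?thesis by (intro integrable_const_bound[where B=1]) (use that in auto)
  qed
  have eq: "(\<Sum>i\<le>N. a i * exp (-t) ^ i) * exp (-t) = (\<Sum>i\<le>N. a i * exp (- (real i + 1) * t))" for t
  proof -
    have "exp (-t) ^ i * exp (-t) = exp (- (real i + 1) * t)" for i
      by (simp add: exp_of_nat_mult[symmetric] exp_add[symmetric] algebra_simps)
    then show ?thesis by (simp add: sum_distrib_right mult.assoc)
  qed
  show ?thesis unfolding eq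
    using int[OF f1 s1 z1] int[OF f2 s2 z2] mom by (simp add: integral_sum)
qed


lemma approx_step_lim:
  fixes y0 y :: real
  shows "(\<lambda>k. max 0 (min 1 (real (Suc k) * (y - y0) + 1))) \<longlonglongrightarrow> (if y0 \<le> y then 1 else 0)"
proof (cases "y0 \<le> y")
  case True
  then have "max 0 (min 1 (real (Suc k) * (y - y0) + 1)) = 1" for k by auto
  then show ?thesis using True by simp
next
  case False
  obtain N :: nat where N: "real N > 1 / (y0 - y)" using reals_Archimedean2 by blast
  have "eventually (\<lambda>k. max 0 (min 1 (real (Suc k) * (y - y0) + 1)) = 0) sequentially"
    unfolding eventually_sequentially
  proof (intro exI allI impI)
    fix k assume "N \<le> k"
    then have "real (Suc k) > 1 / (y0 - y)" using N by linarith
    then have "real (Suc k) * (y0 - y) > 1" using False by (simp add: field_simps)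
    then show "max 0 (min 1 (real (Suc k) * (y - y0) + 1)) = 0" by (simp add: algebra_simps)
  qed
  then show ?thesis using False by (simp add: tendsto_eventually)
qed


lemma poly_approx_step:
  fixes y0 :: real
  obtains P where "\<And>k. real_polynomial_function (P k)"
    "\<And>k y. y \<in> {0..1} \<Longrightarrow> \<bar>P k y\<bar> \<le> 2"
    "\<And>y. y \<in> {0..1} \<Longrightarrow> (\<lambda>k. P k y) \<longlonglongrightarrow> (if y0 \<le> y then 1 else 0)"
proof -
  define f where "f = (\<lambda>k::nat. \<lambda>y::real. max 0 (min 1 (real (Suc k) * (y - y0) + 1)))"
  have "\<forall>k. \<exists>p. real_polynomial_function p \<and> (\<forall>y\<in>{0..1}. \<bar>f k y - p y\<bar> < 1 / real (Suc k))"
  proof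
    fix k
    have "continuous_on {0..1::real} (f k)" unfolding f_def by (intro continuous_intros)
    moreover have "0 < 1 / real (Suc k)" by simp
    ultimately obtain p where "real_polynomial_function p" "\<And>y. y \<in> {0..1} \<Longrightarrow> \<bar>f k y - p y\<bar> < 1 / real (Suc k)"
      using Stone_Weierstrass_real_polynomial_function[OF compact_Icc] by metis
    then show "\<exists>p. real_polynomial_function p \<and> (\<forall>y\<in>{0..1}. \<bar>f k y - p y\<bar> < 1 / real (Suc k))"
      by blast
  qed
  then obtain P where P0: "\<forall>k. real_polynomial_function (P k) \<and> (\<forall>y\<in>{0..1}. \<bar>f k y - P k y\<bar> < 1 / real (Suc k))"
    by (rule choice[THEN exE]) blast
  have P: "\<And>k. real_polynomial_function (P k)"
    "\<And>k y. y \<in> {0..1} \<Longrightarrow> \<bar>f k y - P k y\<bar> < 1 / real (Suc k)"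
    using P0 by auto
  have f01: "0 \<le> f k y \<and> f k y \<le> 1" for k y unfolding f_def by auto
  have Pb: "\<bar>P k y\<bar> \<le> 2" if "y \<in> {0..1}" for k y
  proof -
    have "1 / real (Suc k) \<le> 1" by simp
    then show ?thesis using P(2)[OF that, of k] f01[of k y] by linarith
  qed
  have Plim: "(\<lambda>k. P k y) \<longlonglongrightarrow> (if y0 \<le> y then 1 else 0)" if "y \<in> {0..1}" for y
  proof -
    have "(\<lambda>k. f k y) \<longlonglongrightarrow> (if y0 \<le> y then 1 else 0)"
      unfolding f_def by (rule approx_step_lim)
    moreover have "(\<lambda>k. P k y - f k y) \<longlonglongrightarrow> 0"
    proof (rule Lim_null_comparison)
      have "norm (P k y - f k y) \<le> 1 / real (Suc k)" for k
        using P(2)[OF that, of k] by (simp add: abs_minus_commute)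
      then show "eventually (\<lambda>k. norm (P k y - f k y) \<le> 1 / real (Suc k)) sequentially"
        by simp
      show "(\<lambda>k. 1 / real (Suc k)) \<longlonglongrightarrow> 0" by (rule LIMSEQ_inverse_real_of_nat[unfolded inverse_eq_divide])
    qed
    ultimately have "(\<lambda>k. f k y + (P k y - f k y)) \<longlonglongrightarrow> (if y0 \<le> y then 1 else 0) + 0"
      by (rule tendsto_add)
    then show ?thesis by simp
  qed
  show ?thesis by (rule that[OF P(1) Pb Plim])
qed

lemma ind_moment_eq:
  fixes \<rho>1 \<rho>2 :: "real measure"
  assumes f1: "finite_measure \<rho>1" and f2: "finite_measure \<rho>2"
    and s1: "sets \<rho>1 = sets borel" and s2: "sets \<rho>2 = sets borel"
    and z1: "emeasure \<rho>1 {..0} = 0" and z2: "emeasure \<rho>2 {..0} = 0"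
    and mom: "\<And>n::nat. (\<integral>t. exp (- (real n + 1) * t) \<partial>\<rho>1) = (\<integral>t. exp (- (real n + 1) * t) \<partial>\<rho>2)"
  shows "(\<integral>t. indicator {..c} t * exp (-t) \<partial>\<rho>1) = (\<integral>t. indicator {..c} t * exp (-t) \<partial>\<rho>2)"
proof -
  define y0 where "y0 = exp (-c)"
  obtain P where P: "\<And>k. real_polynomial_function (P k)"
    and Pb: "\<And>k y. y \<in> {0..1} \<Longrightarrow> \<bar>P k y\<bar> \<le> 2"
    and Plim: "\<And>y. y \<in> {0..1} \<Longrightarrow> (\<lambda>k. P k y) \<longlonglongrightarrow> (if y0 \<le> y then 1 else 0)"
    using poly_approx_step[of y0] by blast
  have lim: "(\<lambda>k. \<integral>t. P k (exp (-t)) * exp (-t) \<partial>\<rho>) \<longlonglongrightarrow> (\<integral>t. indicator {..c} t * exp (-t) \<partial>\<rho>)"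
    if "finite_measure \<rho>" "sets \<rho> = sets borel" "emeasure \<rho> {..0} = 0" for \<rho>
  proof -
    interpret finite_measure \<rho> by fact
    have ae: "AE t in \<rho>. t > 0" using AE_pos_of_null[OF that(3,2)] .
    have Pc: "continuous_on UNIV (P k)" for k
      using P continuous_on_polymonial_function real_polynomial_function_eq by blast
    have meas: "(\<lambda>t. P k (exp (-t)) * exp (-t)) \<in> borel_measurable \<rho>" for k
    proof -
      have "continuous_on UNIV (\<lambda>t. P k (exp (-t)) * exp (-t))"
        by (intro continuous_intros continuous_on_compose2[OF Pc[of k]]) auto
      then have "(\<lambda>t. P k (exp (-t)) * exp (-t)) \<in> borel_measurable borel"
        by (rule borel_measurable_continuous_onI)
      then show ?thesis unfolding measurable_cong_sets[OF that(2) refl] by simp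
    qed
    show ?thesis
    proof (rule integral_dominated_convergence[where w="\<lambda>_. 2"])
      show "(\<lambda>t. indicator {..c} t * exp (-t)) \<in> borel_measurable \<rho>"
        unfolding measurable_cong_sets[OF that(2) refl] by simp
      show "\<And>k. (\<lambda>t. P k (exp (-t)) * exp (-t)) \<in> borel_measurable \<rho>" by (rule meas)
      show "integrable \<rho> (\<lambda>_. 2::real)" by simp
      show "AE t in \<rho>. (\<lambda>k. P k (exp (-t)) * exp (-t)) \<longlonglongrightarrow> indicator {..c} t * exp (-t)"
        using ae
      proof eventually_elim
        fix t :: real assume t: "t > 0"
        then have y: "exp (-t) \<in> {0..1}" by auto
        have "(y0 \<le> exp (-t)) = (t \<le> c)" unfolding y0_def by simp
        then show "(\<lambda>k. P k (exp (-t)) * exp (-t)) \<longlonglongrightarrow> indicator {..c} t * exp (-t)"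
          using tendsto_mult_right[OF Plim[OF y], of "exp (-t)"] by (auto simp: indicator_def)
      qed
      show "AE t in \<rho>. norm (P k (exp (-t)) * exp (-t)) \<le> 2" for k
        using ae
      proof eventually_elim
        fix t :: real assume t: "t > 0"
        then have y: "exp (-t) \<in> {0..1}" by auto
        have "\<bar>P k (exp (-t))\<bar> * exp (-t) \<le> 2 * 1"
          using Pb[OF y, of k] y by (intro mult_mono) auto
        then show "norm (P k (exp (-t)) * exp (-t)) \<le> 2" by (simp add: abs_mult)
      qed
    qed
  qed
  have eqk: "(\<integral>t. P k (exp (-t)) * exp (-t) \<partial>\<rho>1) = (\<integral>t. P k (exp (-t)) * exp (-t) \<partial>\<rho>2)" for k
  proof -
    obtain a N where "P k = (\<lambda>x. \<Sum>i\<le>N. a i * x^i)"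
      using P[of k] real_polynomial_function_iff_sum by blast
    then show ?thesis using poly_moment_eq[OF f1 f2 s1 s2 z1 z2 mom, of a N] by simp
  qed
  have "(\<lambda>k. \<integral>t. P k (exp (-t)) * exp (-t) \<partial>\<rho>1) \<longlonglongrightarrow> (\<integral>t. indicator {..c} t * exp (-t) \<partial>\<rho>2)"
    using lim[OF f2 s2 z2] unfolding eqk .
  then show ?thesis using LIMSEQ_unique[OF lim[OF f1 s1 z1]] by blast
qed


lemma density_exp_props:
  fixes \<rho> :: "real measure"
  assumes f: "finite_measure \<rho>" and s: "sets \<rho> = sets borel" and z: "emeasure \<rho> {..0} = 0"
  shows "finite_borel_measure (density \<rho> (\<lambda>t. ennreal (exp (-t))))"
    and "\<And>c. measure (density \<rho> (\<lambda>t. ennreal (exp (-t)))) {..c} = (\<integral>t. indicator {..c} t * exp (-t) \<partial>\<rho>)"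
proof -
  interpret finite_measure \<rho> by fact
  have ae: "AE t in \<rho>. t > 0" using AE_pos_of_null[OF z s] .
  have meas: "(\<lambda>t. ennreal (exp (-t))) \<in> borel_measurable \<rho>"
    unfolding measurable_cong_sets[OF s refl] by simp
  let ?\<tau> = "density \<rho> (\<lambda>t. ennreal (exp (-t)))"
  have "emeasure ?\<tau> (space ?\<tau>) = (\<integral>\<^sup>+ t. ennreal (exp (-t)) * indicator (space \<rho>) t \<partial>\<rho>)"
    using emeasure_density[OF meas, of "space \<rho>"] by simp
  also have "\<dots> = (\<integral>\<^sup>+ t. ennreal (exp (-t)) \<partial>\<rho>)"
    by (intro nn_integral_cong) (simp add: indicator_def)
  also have "\<dots> \<le> (\<integral>\<^sup>+ t. 1 \<partial>\<rho>)"
    using ae by (intro nn_integral_mono_AE) (auto elim!: eventually_mono)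
  also have "\<dots> < \<infinity>" by (simp add: less_top[symmetric])
  finally have fin: "finite_measure ?\<tau>" by (intro finite_measureI) auto
  show "finite_borel_measure ?\<tau>"
    unfolding finite_borel_measure_def finite_borel_measure_axioms_def using fin s by simp
  fix c :: real
  have mc: "(\<lambda>t. indicator {..c} t * exp (-t)) \<in> borel_measurable \<rho>"
    unfolding measurable_cong_sets[OF s refl] by simp
  have "emeasure ?\<tau> {..c} = (\<integral>\<^sup>+ t. ennreal (exp (-t)) * indicator {..c} t \<partial>\<rho>)"
    by (rule emeasure_density[OF meas]) (simp add: s)
  also have "\<dots> = (\<integral>\<^sup>+ t. ennreal (indicator {..c} t * exp (-t)) \<partial>\<rho>)"
    by (intro nn_integral_cong) (auto simp: indicator_def)
  finally have "measure ?\<tau> {..c} = enn2real (\<integral>\<^sup>+ t. ennreal (indicator {..c} t * exp (-t)) \<partial>\<rho>)"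
    by (simp add: measure_def)
  also have "\<dots> = (\<integral>t. indicator {..c} t * exp (-t) \<partial>\<rho>)"
    by (rule integral_eq_nn_integral[symmetric, OF mc]) auto
  finally show "measure ?\<tau> {..c} = (\<integral>t. indicator {..c} t * exp (-t) \<partial>\<rho>)" .
qed

lemma moment_unique:
  fixes \<rho>1 \<rho>2 :: "real measure"
  assumes f1: "finite_measure \<rho>1" and f2: "finite_measure \<rho>2"
    and s1: "sets \<rho>1 = sets borel" and s2: "sets \<rho>2 = sets borel"
    and z1: "emeasure \<rho>1 {..0} = 0" and z2: "emeasure \<rho>2 {..0} = 0"
    and mom: "\<And>n::nat. (\<integral>t. exp (- (real n + 1) * t) \<partial>\<rho>1) = (\<integral>t. exp (- (real n + 1) * t) \<partial>\<rho>2)"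
  shows "\<rho>1 = \<rho>2"
proof -
  let ?tA = "density \<rho>1 (\<lambda>t. ennreal (exp (-t)))"
  let ?tB = "density \<rho>2 (\<lambda>t. ennreal (exp (-t)))"
  have "cdf ?tA = cdf ?tB"
    unfolding cdf_def using density_exp_props(2)[OF f1 s1 z1] density_exp_props(2)[OF f2 s2 z2]
      ind_moment_eq[OF f1 f2 s1 s2 z1 z2 mom] by simp
  then have eq: "?tA = ?tB"
    by (intro cdf_unique' density_exp_props(1) f1 f2 s1 s2 z1 z2)
  have bk: "density (density \<rho> (\<lambda>t. ennreal (exp (-t)))) (\<lambda>t. ennreal (exp t)) = \<rho>"
    if "sets \<rho> = sets borel" for \<rho> :: "real measure"
  proof -
    have m1: "(\<lambda>t. ennreal (exp (-t))) \<in> borel_measurable \<rho>"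
      unfolding measurable_cong_sets[OF that refl] by simp
    have m2: "(\<lambda>t. ennreal (exp t)) \<in> borel_measurable \<rho>"
      unfolding measurable_cong_sets[OF that refl] by simp
    have "ennreal (exp (-t)) * ennreal (exp t) = 1" for t
      by (simp add: ennreal_mult[symmetric] exp_minus field_simps)
    then show ?thesis by (simp add: density_density_eq[OF m1 m2] density_1)
  qed
  have "\<rho>1 = density ?tA (\<lambda>t. ennreal (exp t))" using bk[OF s1] by simp
  also have "\<dots> = density ?tB (\<lambda>t. ennreal (exp t))" using eq by simp
  also have "\<dots> = \<rho>2" using bk[OF s2] by simp
  finally show ?thesis .
qed


lemma one_minus_exp_le:
  fixes l t :: real
  assumes "l > 0" "t \<ge> 0"
  shows "0 \<le> 1 - exp (-(l*t))" "1 - exp (-(l*t)) \<le> max 1 l * min 1 t"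
proof -
  show "0 \<le> 1 - exp (-(l*t))" using assms by simp
  have a: "1 - exp (-(l*t)) \<le> l * t" using exp_ge_add_one_self[of "-(l*t)"] by simp
  have b: "1 - exp (-(l*t)) \<le> 1" by simp
  show "1 - exp (-(l*t)) \<le> max 1 l * min 1 t"
  proof (cases "t \<le> 1")
    case True
    then have "l * t \<le> max 1 l * t" using assms by (intro mult_right_mono) auto
    then show ?thesis using a True by simp
  next
    case False
    then have "1 \<le> max 1 l" by simp
    moreover have "min 1 t = 1" using False by simp
    ultimately show ?thesis using b by linarith
  qed
qed

locale levy_meas =
  fixes \<nu> :: "real measure"
  assumes s: "sets \<nu> = sets borel" and z: "emeasure \<nu> {..0} = 0"
    and fin: "(\<integral>\<^sup>+ t. ennreal (min 1 t) \<partial>\<nu>) < \<infinity>"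
begin

lemma ae_pos: "AE t in \<nu>. t > 0" using AE_pos_of_null[OF z s] .

lemma meas_borel: "f \<in> borel_measurable borel \<Longrightarrow> f \<in> borel_measurable \<nu>"
  unfolding measurable_cong_sets[OF s refl] .

lemma int_min: "integrable \<nu> (\<lambda>t. min 1 t)"
proof -
  have "(\<integral>\<^sup>+ t. ennreal (norm (min 1 t)) \<partial>\<nu>) = (\<integral>\<^sup>+ t. ennreal (min 1 t) \<partial>\<nu>)"
    using ae_pos by (intro nn_integral_cong_AE) (auto elim!: eventually_mono)
  then show ?thesis using fin by (intro integrableI_bounded meas_borel) auto
qed

lemma int_bound:
  assumes "f \<in> borel_measurable borel" "AE t in \<nu>. t > 0 \<longrightarrow> \<bar>f t\<bar> \<le> C * min 1 t"
  shows "integrable \<nu> f"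
proof -
  have i: "integrable \<nu> (\<lambda>t. C * min 1 t)" using int_min by simp
  have "AE t in \<nu>. norm (f t) \<le> norm (C * min 1 t)"
    using ae_pos assms(2) by eventually_elim auto
  then show ?thesis using Bochner_Integration.integrable_bound[OF i meas_borel[OF assms(1)]] by blast
qed

lemma int_1mexp: "l > 0 \<Longrightarrow> integrable \<nu> (\<lambda>t. 1 - exp (-(l*t)))"
  by (rule int_bound[where C="max 1 l"]) (use one_minus_exp_le in \<open>auto intro!: AE_I2\<close>)

lemma int_L: "l > 0 \<Longrightarrow> integrable \<nu> (\<lambda>t. exp (-(l*t)) * (1 - exp (-t)))"
proof (rule int_bound[where C=1])
  assume l: "l > 0"
  show "AE t in \<nu>. t > 0 \<longrightarrow> \<bar>exp (-(l*t)) * (1 - exp (-t))\<bar> \<le> 1 * min 1 t"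
  proof (intro AE_I2 impI)
    fix t :: real assume t: "t > 0"
    have "exp (-(l*t)) \<le> 1" using l t by simp
    moreover have "0 \<le> 1 - exp (-t)" "1 - exp (-t) \<le> min 1 t"
      using one_minus_exp_le[of 1 t] t by auto
    ultimately have "exp (-(l*t)) * (1 - exp (-t)) \<le> 1 * min 1 t"
      by (intro mult_mono) auto
    moreover have "0 \<le> exp (-(l*t)) * (1 - exp (-t))" using \<open>0 \<le> 1 - exp (-t)\<close> by simp
    ultimately show "\<bar>exp (-(l*t)) * (1 - exp (-t))\<bar> \<le> 1 * min 1 t" by simp
  qed
qed simp

lemma diff_eq: "l > 0 \<Longrightarrow> (\<integral>t. (1 - exp (-((l+1)*t))) \<partial>\<nu>) - (\<integral>t. (1 - exp (-(l*t))) \<partial>\<nu>)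
   = (\<integral>t. exp (-(l*t)) * (1 - exp (-t)) \<partial>\<nu>)"
proof -
  assume l: "l > 0"
  have "(\<integral>t. (1 - exp (-((l+1)*t))) \<partial>\<nu>) - (\<integral>t. (1 - exp (-(l*t))) \<partial>\<nu>)
      = (\<integral>t. (1 - exp (-((l+1)*t))) - (1 - exp (-(l*t))) \<partial>\<nu>)"
  proof -
    have i1: "integrable \<nu> (\<lambda>t. 1 - exp (-((l+1)*t)))" using int_1mexp[of "l+1"] l by simp
    have i2: "integrable \<nu> (\<lambda>t. 1 - exp (-(l*t)))" using int_1mexp[of l] l by simp
    show ?thesis using Bochner_Integration.integral_diff[OF i1 i2] by simp
  qed
  also have "\<dots> = (\<integral>t. exp (-(l*t)) * (1 - exp (-t)) \<partial>\<nu>)"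
  proof (rule Bochner_Integration.integral_cong[OF refl])
    fix t :: real
    have "exp (-((l+1)*t)) = exp (-(l*t)) * exp (-t)" by (simp add: exp_add[symmetric] algebra_simps)
    then show "(1 - exp (-((l+1)*t))) - (1 - exp (-(l*t))) = exp (-(l*t)) * (1 - exp (-t))"
      by (simp add: algebra_simps)
  qed
  finally show ?thesis .
qed

lemma L_lim: "(\<lambda>n. \<integral>t. exp (-(real (Suc n)*t)) * (1 - exp (-t)) \<partial>\<nu>) \<longlonglongrightarrow> 0"
proof -
  have "(\<lambda>n. \<integral>t. exp (-(real (Suc n)*t)) * (1 - exp (-t)) \<partial>\<nu>) \<longlonglongrightarrow> (\<integral>t. 0 \<partial>\<nu>)"
  proof (rule integral_dominated_convergence[where w="\<lambda>t. min 1 t"])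
    show "(\<lambda>t. 0::real) \<in> borel_measurable \<nu>" by simp
    show "\<And>n. (\<lambda>t. exp (-(real (Suc n)*t)) * (1 - exp (-t))) \<in> borel_measurable \<nu>"
      by (intro meas_borel) simp
    show "integrable \<nu> (\<lambda>t. min 1 t)" by (rule int_min)
    show "AE t in \<nu>. (\<lambda>n. exp (-(real (Suc n)*t)) * (1 - exp (-t))) \<longlonglongrightarrow> 0"
      using ae_pos
    proof eventually_elim
      fix t :: real assume t: "t > 0"
      have X: "(\<lambda>n. exp (-(real (Suc n)*t))) \<longlonglongrightarrow> 0"
      proof -
        have "filterlim (\<lambda>n. t * real (Suc n)) at_top sequentially"
          by (rule filterlim_tendsto_pos_mult_at_top[OF tendsto_const t filterlim_compose[OF filterlim_real_sequentially filterlim_Suc]])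
        then have "filterlim (\<lambda>n. real (Suc n)*t) at_top sequentially"
          by (simp add: mult.commute)
        then have "filterlim (\<lambda>n. -(real (Suc n)*t)) at_bot sequentially"
          by (rule filterlim_uminus_at_top[THEN iffD1])
        from filterlim_compose[OF exp_at_bot this] show ?thesis .
      qed
      show "(\<lambda>n. exp (-(real (Suc n)*t)) * (1 - exp (-t))) \<longlonglongrightarrow> 0"
        using tendsto_mult[OF X tendsto_const[of "1 - exp (-t)"]] by simp
    qed
    show "AE t in \<nu>. norm (exp (-(real (Suc n)*t)) * (1 - exp (-t))) \<le> min 1 t" for n
      using ae_pos
    proof eventually_elim
      fix t :: real assume t: "t > 0"
      have "exp (-(real (Suc n)*t)) \<le> 1" using t by simp
      moreover have "0 \<le> 1 - exp (-t)" "1 - exp (-t) \<le> min 1 t"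
        using one_minus_exp_le[of 1 t] t by auto
      ultimately have "exp (-(real (Suc n)*t)) * (1 - exp (-t)) \<le> 1 * min 1 t"
        by (intro mult_mono) auto
      moreover have "0 \<le> exp (-(real (Suc n)*t)) * (1 - exp (-t))" using \<open>0 \<le> 1 - exp (-t)\<close> by simp
      ultimately show "norm (exp (-(real (Suc n)*t)) * (1 - exp (-t))) \<le> min 1 t" by simp
    qed
  qed
  then show ?thesis by simp
qed

definition "rho = density \<nu> (\<lambda>t. ennreal (1 - exp (-t)))"

lemma rho_props: "finite_measure rho" "sets rho = sets borel" "emeasure rho {..0} = 0"
proof -
  have m: "(\<lambda>t. ennreal (1 - exp (-t))) \<in> borel_measurable \<nu>" by (intro meas_borel) simp
  have "emeasure rho (space rho) = (\<integral>\<^sup>+ t. ennreal (1 - exp (-t)) * indicator (space \<nu>) t \<partial>\<nu>)"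
    unfolding rho_def using emeasure_density[OF m, of "space \<nu>"] by simp
  also have "\<dots> \<le> (\<integral>\<^sup>+ t. ennreal (min 1 t) \<partial>\<nu>)"
    using ae_pos
  proof (intro nn_integral_mono_AE, eventually_elim)
    fix t :: real assume t: "t > 0"
    have "1 - exp (-t) \<le> min 1 t" using one_minus_exp_le[of 1 t] t by auto
    then show "ennreal (1 - exp (-t)) * indicator (space \<nu>) t \<le> ennreal (min 1 t)"
      by (simp add: indicator_def ennreal_leI)
  qed
  finally show "finite_measure rho" using fin by (intro finite_measureI) (auto simp: top.not_eq_extremum)
  show "sets rho = sets borel" unfolding rho_def using s by simp
  have "emeasure rho {..0} = (\<integral>\<^sup>+ t. ennreal (1 - exp (-t)) * indicator {..0} t \<partial>\<nu>)"
    unfolding rho_def by (rule emeasure_density[OF m]) (simp add: s)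
  also have "\<dots> = (\<integral>\<^sup>+ t. 0 \<partial>\<nu>)"
    using ae_pos by (intro nn_integral_cong_AE) (auto elim!: eventually_mono simp: indicator_def)
  finally show "emeasure rho {..0} = 0" by simp
qed

lemma rho_moment: "l > 0 \<Longrightarrow> (\<integral>t. exp (-(l*t)) \<partial>rho) = (\<integral>t. exp (-(l*t)) * (1 - exp (-t)) \<partial>\<nu>)"
proof -
  assume l: "l > 0"
  have "(\<integral>t. exp (-(l*t)) \<partial>rho) = (\<integral>t. (1 - exp (-t)) *\<^sub>R exp (-(l*t)) \<partial>\<nu>)"
    unfolding rho_def
    by (rule integral_density) (use ae_pos in \<open>auto intro!: meas_borel elim!: eventually_mono\<close>)
  then show ?thesis by (simp add: mult.commute)
qed

lemma rho_back: "density rho (\<lambda>t. ennreal (if t > 0 then 1 / (1 - exp (-t)) else 0)) = \<nu>"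
proof -
  have m1: "(\<lambda>t. ennreal (1 - exp (-t))) \<in> borel_measurable \<nu>" by (intro meas_borel) simp
  have m2: "(\<lambda>t. ennreal (if t > 0 then 1 / (1 - exp (-t)) else 0)) \<in> borel_measurable \<nu>"
    by (intro meas_borel) simp
  have "density rho (\<lambda>t. ennreal (if t > 0 then 1 / (1 - exp (-t)) else 0))
     = density \<nu> (\<lambda>t. ennreal (1 - exp (-t)) * ennreal (if t > 0 then 1 / (1 - exp (-t)) else 0))"
    unfolding rho_def by (rule density_density_eq[OF m1 m2])
  also have "\<dots> = density \<nu> (\<lambda>_. 1)"
  proof (rule density_cong)
    show "(\<lambda>t. ennreal (1 - exp (-t)) * ennreal (if t > 0 then 1 / (1 - exp (-t)) else 0)) \<in> borel_measurable \<nu>"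
      using m1 m2 by measurable
    show "(\<lambda>_. 1::ennreal) \<in> borel_measurable \<nu>" by simp
    show "AE t in \<nu>. ennreal (1 - exp (-t)) * ennreal (if t > 0 then 1 / (1 - exp (-t)) else 0) = 1"
      using ae_pos
    proof eventually_elim
      fix t :: real assume t: "t > 0"
      then have "1 - exp (-t) > 0" by simp
      then show "ennreal (1 - exp (-t)) * ennreal (if t > 0 then 1 / (1 - exp (-t)) else 0) = 1"
        using t by (simp add: ennreal_mult[symmetric])
    qed
  qed
  also have "\<dots> = \<nu>" by (rule density_1)
  finally show ?thesis .
qed

end

lemma levy_unique:
  fixes \<nu>1 \<nu>2 :: "real measure"
  assumes L1: "levy_meas \<nu>1" and L2: "levy_meas \<nu>2"
    and eq: "\<And>l. l > 0 \<Longrightarrow> a + b*l + (\<integral>t. (1 - exp (-(l*t))) \<partial>\<nu>1) = (\<integral>t. (1 - exp (-(l*t))) \<partial>\<nu>2)"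
  shows "\<nu>1 = \<nu>2"
proof -
  interpret A: levy_meas \<nu>1 by fact
  interpret B: levy_meas \<nu>2 by fact
  have Leq: "b + (\<integral>t. exp (-(l*t)) * (1 - exp (-t)) \<partial>\<nu>1) = (\<integral>t. exp (-(l*t)) * (1 - exp (-t)) \<partial>\<nu>2)"
    if l: "l > 0" for l
  proof -
    have "(l+1) > 0" using l by simp
    from eq[OF this] eq[OF l] have "b + ((\<integral>t. (1 - exp (-((l+1)*t))) \<partial>\<nu>1) - (\<integral>t. (1 - exp (-(l*t))) \<partial>\<nu>1))
      = (\<integral>t. (1 - exp (-((l+1)*t))) \<partial>\<nu>2) - (\<integral>t. (1 - exp (-(l*t))) \<partial>\<nu>2)"
      by (simp add: algebra_simps)
    then show ?thesis unfolding A.diff_eq[OF l] B.diff_eq[OF l] .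
  qed
  have "(\<lambda>n. b + (\<integral>t. exp (-(real (Suc n)*t)) * (1 - exp (-t)) \<partial>\<nu>1)) \<longlonglongrightarrow> b + 0"
    by (intro tendsto_add tendsto_const A.L_lim)
  moreover have "(\<lambda>n. b + (\<integral>t. exp (-(real (Suc n)*t)) * (1 - exp (-t)) \<partial>\<nu>1)) \<longlonglongrightarrow> 0"
    using B.L_lim Leq[of "real (Suc _)"] by simp
  ultimately have b0: "b = 0" using LIMSEQ_unique by fastforce
  have mom: "(\<integral>t. exp (- (real n + 1) * t) \<partial>A.rho) = (\<integral>t. exp (- (real n + 1) * t) \<partial>B.rho)" for n :: nat
  proof -
    have p: "real n + 1 > 0" by simp
    have "(\<integral>t. exp (- (real n + 1) * t) \<partial>A.rho) = (\<integral>t. exp (-((real n + 1)*t)) \<partial>A.rho)" by (simp only: minus_mult_left)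
    also have "\<dots> = (\<integral>t. exp (-((real n + 1)*t)) \<partial>B.rho)"
      unfolding A.rho_moment[OF p] B.rho_moment[OF p] using Leq[OF p] b0 by simp
    finally show ?thesis by (simp only: minus_mult_left)
  qed
  have "A.rho = B.rho"
    by (rule moment_unique[OF A.rho_props(1) B.rho_props(1) A.rho_props(2) B.rho_props(2)
          A.rho_props(3) B.rho_props(3) mom])
  then show ?thesis using A.rho_back B.rho_back by metis
qed


lemma ae_eq_cont:
  fixes f g :: "real \<Rightarrow> real"
  assumes cf: "continuous_on {0<..} f" and cg: "continuous_on {0<..} g"
    and ae: "AE t in lborel. t > 0 \<longrightarrow> f t = g t"
    and t0: "t0 > 0"
  shows "f t0 = g t0"
proof (rule ccontr)
  assume ne: "f t0 \<noteq> g t0"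
  have "continuous_on {0<..} (\<lambda>t. f t - g t)" using cf cg by (intro continuous_intros)
  then have "open ({0<..} \<inter> (\<lambda>t. f t - g t) -` (-{0}))"
    by (intro continuous_open_preimage) auto
  moreover have "t0 \<in> {0<..} \<inter> (\<lambda>t. f t - g t) -` (-{0})" using ne t0 by auto
  ultimately obtain r where r: "r > 0" "ball t0 r \<subseteq> {0<..} \<inter> (\<lambda>t. f t - g t) -` (-{0})"
    by (meson open_contains_ball)
  from ae obtain N where N: "{t \<in> space lborel. \<not> (t > 0 \<longrightarrow> f t = g t)} \<subseteq> N" "N \<in> sets lborel" "emeasure lborel N = 0"
    by (auto elim!: AE_E)
  have "{t0 - r <..< t0 + r} \<subseteq> N"
  proof
    fix t assume "t \<in> {t0 - r <..< t0 + r}"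
    then have "t \<in> ball t0 r" by (auto simp: dist_real_def abs_less_iff)
    then have "t > 0" "f t \<noteq> g t" using r(2) by auto
    then show "t \<in> N" using N(1) by auto
  qed
  then have "emeasure lborel {t0 - r <..< t0 + r} \<le> emeasure lborel N"
    by (intro emeasure_mono N(2))
  then show False using N(3) r(1) by simp
qed


lemma omega0_le0: "omega0 f \<le> 0"
proof (cases "\<forall>n. \<bar>deriv_at_0plus f n\<bar> \<noteq> \<infinity>")
  case True
  have "ereal 0 \<in> {ereal l | l. summable (\<lambda>n. real_of_ereal (deriv_at_0plus f n) / fact n * l ^ n)}"
    using summable_zero_power'[of "\<lambda>n. real_of_ereal (deriv_at_0plus f n) / fact n"] by blast
  then have "Inf {ereal l | l. summable (\<lambda>n. real_of_ereal (deriv_at_0plus f n) / fact n * l ^ n)} \<le> ereal 0"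
    by (rule Inf_lower)
  then show ?thesis using True by (simp add: omega0_def zero_ereal_def)
next
  case False then show ?thesis unfolding omega0_def by (subst if_not_P[OF False]) simp
qed

lemma levy_triple_meas: "levy_triple f a b \<mu> \<Longrightarrow> levy_meas \<mu>"
  unfolding levy_triple_def levy_meas_def by auto

lemma levy_triple_eq: "levy_triple f a b \<mu> \<Longrightarrow> l > 0 \<Longrightarrow> f l = a + b * l + (\<integral>t. 1 - exp (-(l*t)) \<partial>\<mu>)"
  unfolding levy_triple_def by (simp only: minus_mult_left)

lemma density_from_cbf:
  fixes \<phi> :: "real \<Rightarrow> real" and \<mu> :: "real measure" and a :: real
  assumes L: "levy_meas \<mu>"
    and i1: "\<And>l. l > 0 \<Longrightarrow> integrable \<mu> (\<lambda>t. 1 - exp (-((l+a)*t)))"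
    and i2: "integrable \<mu> (\<lambda>t. 1 - exp (-(a*t)))"
    and r1: "\<And>l. l > 0 \<Longrightarrow> phi_ext \<phi> (l+a) = (\<integral>t. 1 - exp (-((l+a)*t)) \<partial>\<mu>)"
    and r2: "phi_ext \<phi> a = (\<integral>t. 1 - exp (-(a*t)) \<partial>\<mu>)"
    and r3: "(\<integral>\<^sup>+ t. ennreal (exp (-(a*t)) * min 1 t) \<partial>\<mu>) < \<infinity>"
    and cbf: "complete_bernstein (\<lambda>l. phi_ext \<phi> (l + a) - phi_ext \<phi> a)"
  obtains m where "completely_monotone m" "m \<in> borel_measurable borel" "\<And>t. t > 0 \<Longrightarrow> m t \<ge> 0"
    "\<mu> = density lborel (\<lambda>t. ennreal (indicator {0<..} t * (exp (a*t) * m t)))"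
proof -
  interpret levy_meas \<mu> by fact
  from cbf obtain a' b' \<nu>1 m where T: "levy_triple (\<lambda>l. phi_ext \<phi> (l + a) - phi_ext \<phi> a) a' b' \<nu>1"
    and D: "has_density_on_pos \<nu>1 m" and cm: "completely_monotone m"
    unfolding complete_bernstein_def by blast
  from D have mm: "m \<in> borel_measurable borel" and mpos: "\<And>t. t > 0 \<Longrightarrow> m t \<ge> 0"
    and nu1: "\<nu>1 = density lborel (\<lambda>t. ennreal (indicator {0<..} t * m t))"
    unfolding has_density_on_pos_def by auto
  define \<nu>2 where "\<nu>2 = density \<mu> (\<lambda>t. ennreal (exp (-(a*t))))"
  have me: "(\<lambda>t. ennreal (exp (-(a*t)))) \<in> borel_measurable \<mu>" by (intro meas_borel) simp
  have L2: "levy_meas \<nu>2"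
    unfolding levy_meas_def
  proof (intro conjI)
    show "sets \<nu>2 = sets borel" unfolding \<nu>2_def using s by simp
    have "emeasure \<nu>2 {..0} = (\<integral>\<^sup>+ t. ennreal (exp (-(a*t))) * indicator {..0} t \<partial>\<mu>)"
      unfolding \<nu>2_def by (rule emeasure_density[OF me]) (simp add: s)
    also have "\<dots> = (\<integral>\<^sup>+ t. 0 \<partial>\<mu>)"
      using ae_pos by (intro nn_integral_cong_AE) (auto elim!: eventually_mono simp: indicator_def)
    finally show "emeasure \<nu>2 {..0} = 0" by simp
    have "(\<integral>\<^sup>+ t. ennreal (min 1 t) \<partial>\<nu>2) = (\<integral>\<^sup>+ t. ennreal (exp (-(a*t))) * ennreal (min 1 t) \<partial>\<mu>)"
      unfolding \<nu>2_def by (rule nn_integral_density[OF me]) (intro meas_borel, simp)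
    also have "\<dots> = (\<integral>\<^sup>+ t. ennreal (exp (-(a*t)) * min 1 t) \<partial>\<mu>)"
      by (intro nn_integral_cong) (simp add: ennreal_mult')
    finally show "(\<integral>\<^sup>+ t. ennreal (min 1 t) \<partial>\<nu>2) < \<infinity>" using r3 by simp
  qed
  have L1: "levy_meas \<nu>1" by (rule levy_triple_meas[OF T])
  have eq: "a' + b'*l + (\<integral>t. (1 - exp (-(l*t))) \<partial>\<nu>1) = (\<integral>t. (1 - exp (-(l*t))) \<partial>\<nu>2)" if l: "l > 0" for l
  proof -
    have "a' + b'*l + (\<integral>t. (1 - exp (-(l*t))) \<partial>\<nu>1) = phi_ext \<phi> (l + a) - phi_ext \<phi> a"
      using levy_triple_eq[OF T l] by simp
    also have "\<dots> = (\<integral>t. 1 - exp (-((l+a)*t)) \<partial>\<mu>) - (\<integral>t. 1 - exp (-(a*t)) \<partial>\<mu>)"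
      using r1[OF l] r2 by simp
    also have "\<dots> = (\<integral>t. (1 - exp (-((l+a)*t))) - (1 - exp (-(a*t))) \<partial>\<mu>)"
      using Bochner_Integration.integral_diff[OF i1[OF l] i2] by simp
    also have "\<dots> = (\<integral>t. exp (-(a*t)) * (1 - exp (-(l*t))) \<partial>\<mu>)"
    proof (rule Bochner_Integration.integral_cong[OF refl])
      fix t :: real
      have "exp (-((l+a)*t)) = exp (-(a*t)) * exp (-(l*t))" by (simp add: exp_add[symmetric] algebra_simps)
      then show "(1 - exp (-((l+a)*t))) - (1 - exp (-(a*t))) = exp (-(a*t)) * (1 - exp (-(l*t)))"
        by (simp add: algebra_simps)
    qed
    also have "\<dots> = (\<integral>t. (1 - exp (-(l*t))) \<partial>\<nu>2)"
      unfolding \<nu>2_def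
      by (subst integral_density) (auto intro!: meas_borel)
    finally show ?thesis .
  qed
  have "\<nu>1 = \<nu>2" by (rule levy_unique[OF L1 L2 eq])
  have m1: "(\<lambda>t. ennreal (exp (a*t))) \<in> borel_measurable \<mu>" by (intro meas_borel) simp
  have "\<mu> = density \<nu>2 (\<lambda>t. ennreal (exp (a*t)))"
  proof -
    have "density \<nu>2 (\<lambda>t. ennreal (exp (a*t))) = density \<mu> (\<lambda>t. ennreal (exp (-(a*t))) * ennreal (exp (a*t)))"
      unfolding \<nu>2_def by (rule density_density_eq[OF me m1])
    also have "\<dots> = density \<mu> (\<lambda>_. 1)"
    proof -
      have "ennreal (exp (-(a*t))) * ennreal (exp (a*t)) = 1" for t
        by (simp add: ennreal_mult[symmetric] exp_minus field_simps)
      then show ?thesis by simp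
    qed
    finally show ?thesis by (simp add: density_1)
  qed
  also have "\<dots> = density \<nu>1 (\<lambda>t. ennreal (exp (a*t)))" using \<open>\<nu>1 = \<nu>2\<close> by simp
  also have "\<dots> = density lborel (\<lambda>t. ennreal (indicator {0<..} t * m t) * ennreal (exp (a*t)))"
    unfolding nu1 by (rule density_density_eq) (use mm in auto)
  also have "\<dots> = density lborel (\<lambda>t. ennreal (indicator {0<..} t * (exp (a*t) * m t)))"
  proof -
    have "ennreal (indicator {0<..} t * m t) * ennreal (exp (a*t)) = ennreal (indicator {0<..} t * (exp (a*t) * m t))" for t
    proof (cases "t > 0")
      case True
      then show ?thesis using mpos[OF True] by (simp add: ennreal_mult[symmetric] mult_ac)
    qed simp
    then show ?thesis by simp
  qed
  finally show ?thesis using that cm mm mpos by blast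
qed


lemma exp_ge_term:
  fixes x :: real assumes "x \<ge> 0"
  shows "x^n / fact n \<le> exp x"
proof -
  have s: "(\<lambda>n. x^n / fact n) sums exp x" using exp_converges[of x] by (simp add: divide_inverse mult.commute)
  have "sum (\<lambda>n. x^n / fact n) {n} \<le> suminf (\<lambda>n. x^n / fact n)"
    by (rule sum_le_suminf) (use s assms in \<open>auto simp: sums_iff\<close>)
  then show ?thesis using s by (simp add: sums_iff)
qed

lemma powexp_bound:
  fixes t \<eta> :: real assumes "t \<ge> 0" "\<eta> > 0"
  shows "t^m * exp (-(\<eta>*t)) \<le> fact m / \<eta>^m"
proof -
  have "(\<eta>*t)^m / fact m \<le> exp (\<eta>*t)" using assms by (intro exp_ge_term) auto
  then have "\<eta>^m * t^m \<le> fact m * exp (\<eta>*t)"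
    by (simp add: field_simps power_mult_distrib)
  then have "t^m \<le> fact m * exp (\<eta>*t) / \<eta>^m" using assms by (simp add: field_simps)
  then have "t^m * exp (-(\<eta>*t)) \<le> fact m * exp (\<eta>*t) / \<eta>^m * exp (-(\<eta>*t))"
    by (intro mult_right_mono) auto
  also have "\<dots> = fact m / \<eta>^m" by (simp add: exp_minus field_simps)
  finally show ?thesis .
qed

lemma DERIV_integral:
  fixes K K' :: "real \<Rightarrow> real \<Rightarrow> real" and M :: "real measure" and W :: "real \<Rightarrow> real"
  assumes d: "\<delta> > 0"
    and int: "\<And>y. \<bar>y - x0\<bar> < \<delta> \<Longrightarrow> integrable M (K y)"
    and meas: "K' x0 \<in> borel_measurable M"
    and der: "AE t in M. \<forall>y. \<bar>y - x0\<bar> < \<delta> \<longrightarrow> ((\<lambda>y. K y t) has_real_derivative K' y t) (at y)"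
    and W: "integrable M W"
    and bnd: "AE t in M. \<forall>y. \<bar>y - x0\<bar> < \<delta> \<longrightarrow> \<bar>K' y t\<bar> \<le> W t"
  shows "((\<lambda>y. \<integral>t. K y t \<partial>M) has_real_derivative (\<integral>t. K' x0 t \<partial>M)) (at x0)"
  unfolding has_field_derivative_iff tendsto_at_iff_sequentially
proof (intro allI impI)
  fix X :: "nat \<Rightarrow> real" assume X: "\<forall>i. X i \<in> UNIV - {x0}" "X \<longlonglongrightarrow> x0"
  from X(2) d obtain N where N: "\<And>i. i \<ge> N \<Longrightarrow> dist (X i) x0 < \<delta>"
    unfolding lim_sequentially by blast
  define Y where "Y = (\<lambda>i. X (i + N))"
  have Y: "\<And>i. \<bar>Y i - x0\<bar> < \<delta>" "\<And>i. Y i \<noteq> x0" "Y \<longlonglongrightarrow> x0"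
    using N X unfolding Y_def dist_real_def
    by (auto intro: LIMSEQ_ignore_initial_segment)
  have q: "(\<integral>t. K (Y i) t \<partial>M) - (\<integral>t. K x0 t \<partial>M) = (\<integral>t. (K (Y i) t - K x0 t) \<partial>M)" for i
    using Bochner_Integration.integral_diff[OF int[OF Y(1)] int[of x0]] d by simp
  have "(\<lambda>i. \<integral>t. (K (Y i) t - K x0 t) / (Y i - x0) \<partial>M) \<longlonglongrightarrow> (\<integral>t. K' x0 t \<partial>M)"
  proof (rule integral_dominated_convergence[where w=W])
    show "K' x0 \<in> borel_measurable M" by (rule meas)
    show "(\<lambda>t. (K (Y i) t - K x0 t) / (Y i - x0)) \<in> borel_measurable M" for i
      using int[OF Y(1)[of i]] int[of x0] d by (intro borel_measurable_divide borel_measurable_diff) auto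
    show "integrable M W" by (rule W)
    show "AE t in M. (\<lambda>i. (K (Y i) t - K x0 t) / (Y i - x0)) \<longlonglongrightarrow> K' x0 t"
      using der
    proof eventually_elim
      fix t assume "\<forall>y. \<bar>y - x0\<bar> < \<delta> \<longrightarrow> ((\<lambda>y. K y t) has_real_derivative K' y t) (at y)"
      then have "((\<lambda>y. K y t) has_real_derivative K' x0 t) (at x0)" using d by auto
      then have "((\<lambda>y. (K y t - K x0 t) / (y - x0)) \<longlongrightarrow> K' x0 t) (at x0)"
        unfolding has_field_derivative_iff .
      then have "((\<lambda>y. (K y t - K x0 t) / (y - x0)) \<circ> Y) \<longlonglongrightarrow> K' x0 t"
        unfolding tendsto_at_iff_sequentially using Y(2,3) by blast
      then show "(\<lambda>i. (K (Y i) t - K x0 t) / (Y i - x0)) \<longlonglongrightarrow> K' x0 t" by (simp add: o_def)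
    qed
    show "AE t in M. norm ((K (Y i) t - K x0 t) / (Y i - x0)) \<le> W t" for i
      using der bnd
    proof eventually_elim
      fix t assume D: "\<forall>y. \<bar>y - x0\<bar> < \<delta> \<longrightarrow> ((\<lambda>y. K y t) has_real_derivative K' y t) (at y)"
        and B: "\<forall>y. \<bar>y - x0\<bar> < \<delta> \<longrightarrow> \<bar>K' y t\<bar> \<le> W t"
      have "\<exists>z. \<bar>z - x0\<bar> < \<delta> \<and> K (Y i) t - K x0 t = (Y i - x0) * K' z t"
      proof (cases "Y i < x0")
        case True
        have "\<exists>z. Y i < z \<and> z < x0 \<and> K x0 t - K (Y i) t = (x0 - Y i) * K' z t"
          by (rule MVT2[OF True]) (use D Y(1)[of i] d in auto)
        then obtain z where "Y i < z" "z < x0" "K x0 t - K (Y i) t = (x0 - Y i) * K' z t" by blast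
        moreover then have "\<bar>z - x0\<bar> < \<delta>" using Y(1)[of i] by auto
        ultimately show ?thesis by (intro exI[of _ z]) (auto simp: algebra_simps)
      next
        case False
        then have lt: "x0 < Y i" using Y(2)[of i] by auto
        have "\<exists>z. x0 < z \<and> z < Y i \<and> K (Y i) t - K x0 t = (Y i - x0) * K' z t"
          by (rule MVT2[OF lt]) (use D Y(1)[of i] d in auto)
        then obtain z where "x0 < z" "z < Y i" "K (Y i) t - K x0 t = (Y i - x0) * K' z t" by blast
        moreover then have "\<bar>z - x0\<bar> < \<delta>" using Y(1)[of i] by auto
        ultimately show ?thesis by (intro exI[of _ z]) auto
      qed
      then obtain z where z: "\<bar>z - x0\<bar> < \<delta>" "K (Y i) t - K x0 t = (Y i - x0) * K' z t" by blast
      have "(K (Y i) t - K x0 t) / (Y i - x0) = K' z t" using z(2) Y(2)[of i] by simp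
      then show "norm ((K (Y i) t - K x0 t) / (Y i - x0)) \<le> W t" using B z(1) by simp
    qed
  qed
  then have "(\<lambda>i. ((\<integral>t. K (Y i) t \<partial>M) - (\<integral>t. K x0 t \<partial>M)) / (Y i - x0)) \<longlonglongrightarrow> (\<integral>t. K' x0 t \<partial>M)"
    unfolding q by simp
  then have "(\<lambda>i. ((\<lambda>y. ((\<integral>t. K y t \<partial>M) - (\<integral>t. K x0 t \<partial>M)) / (y - x0)) \<circ> X) (i + N)) \<longlonglongrightarrow> (\<integral>t. K' x0 t \<partial>M)"
    by (simp add: Y_def o_def)
  then show "((\<lambda>y. ((\<integral>t. K y t \<partial>M) - (\<integral>t. K x0 t \<partial>M)) / (y - x0)) \<circ> X) \<longlonglongrightarrow> (\<integral>t. K' x0 t \<partial>M)"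
    by (rule LIMSEQ_offset)
qed


lemma pow_exp_min_bound:
  fixes t y \<eta> :: real
  assumes "t > 0" "\<eta> > 0" "y \<ge> \<eta>" "n \<ge> 1"
  shows "t^n * exp (-(y*t)) \<le> max 1 (fact n / \<eta>^n) * min 1 t"
proof -
  have y0: "y > 0" using assms by linarith
  have "\<eta>*t \<le> y*t" using assms by (intro mult_right_mono) auto
  then have e: "exp (-(y*t)) \<le> exp (-(\<eta>*t))" by simp
  show ?thesis
  proof (cases "t \<le> 1")
    case True
    have "t^n = t * t^(n-1)" using assms(4) by (metis Suc_diff_le diff_Suc_1 power_Suc)
    also have "\<dots> \<le> t * 1" using True assms(1) by (intro mult_left_mono power_le_one) auto
    finally have tn: "t^n \<le> t" by simp
    have "t^n * exp (-(y*t)) \<le> t^n * 1" using assms(1) y0 by (intro mult_left_mono) (auto simp: mult_nonneg_nonneg less_imp_le)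
    also have "\<dots> \<le> t" using tn by simp
    also have "\<dots> \<le> max 1 (fact n / \<eta>^n) * t" using mult_right_mono[of 1 "max 1 (fact n / \<eta>^n)" t] assms(1) by simp
    finally show ?thesis using True by simp
  next
    case False
    have "t^n * exp (-(y*t)) \<le> t^n * exp (-(\<eta>*t))" using e assms(1) by (intro mult_left_mono) auto
    also have "\<dots> \<le> fact n / \<eta>^n" using powexp_bound[of t \<eta> n] assms by simp
    also have "\<dots> \<le> max 1 (fact n / \<eta>^n) * 1" by simp
    finally show ?thesis using False by simp
  qed
qed

context levy_meas
begin

definition "F n y = (\<integral>t. t^n * exp (-(y*t)) \<partial>\<nu>)"

lemma int_F: "y > 0 \<Longrightarrow> n \<ge> 1 \<Longrightarrow> integrable \<nu> (\<lambda>t. t^n * exp (-(y*t)))"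
  by (rule int_bound[where C="max 1 (fact n / y^n)"])
     (auto intro!: AE_I2 simp: pow_exp_min_bound)

lemma DERIV_F:
  assumes x0: "x0 > 0" and n: "n \<ge> 1"
  shows "(F n has_real_derivative (- F (Suc n) x0)) (at x0)"
proof -
  define \<eta> where "\<eta> = x0 / 2"
  have \<eta>: "\<eta> > 0" using x0 by (simp add: \<eta>_def)
  have "((\<lambda>y. \<integral>t. t^n * exp (-(y*t)) \<partial>\<nu>) has_real_derivative (\<integral>t. - (t^Suc n * exp (-(x0*t))) \<partial>\<nu>)) (at x0)"
  proof (rule DERIV_integral[where \<delta>=\<eta> and W="\<lambda>t. max 1 (fact (Suc n) / \<eta>^Suc n) * min 1 t"])
    show "\<eta> > 0" by (rule \<eta>)
    show "integrable \<nu> (\<lambda>t. t^n * exp (-(y*t)))" if "\<bar>y - x0\<bar> < \<eta>" for y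
    proof -
      have "y > 0" using that x0 unfolding \<eta>_def by (auto simp: abs_if split: if_split_asm)
      then show ?thesis using n by (intro int_F)
    qed
    show "(\<lambda>t. - (t^Suc n * exp (-(x0*t)))) \<in> borel_measurable \<nu>" by (intro meas_borel) simp
    show "AE t in \<nu>. \<forall>y. \<bar>y - x0\<bar> < \<eta> \<longrightarrow> ((\<lambda>y. t^n * exp (-(y*t))) has_real_derivative - (t^Suc n * exp (-(y*t)))) (at y)"
      by (intro AE_I2 allI impI) (auto intro!: derivative_eq_intros simp: algebra_simps)
    show "integrable \<nu> (\<lambda>t. max 1 (fact (Suc n) / \<eta>^Suc n) * min 1 t)" using int_min by simp
    show "AE t in \<nu>. \<forall>y. \<bar>y - x0\<bar> < \<eta> \<longrightarrow> \<bar>- (t^Suc n * exp (-(y*t)))\<bar> \<le> max 1 (fact (Suc n) / \<eta>^Suc n) * min 1 t"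
      using ae_pos
    proof eventually_elim
      fix t :: real assume t: "t > 0"
      show "\<forall>y. \<bar>y - x0\<bar> < \<eta> \<longrightarrow> \<bar>- (t^Suc n * exp (-(y*t)))\<bar> \<le> max 1 (fact (Suc n) / \<eta>^Suc n) * min 1 t"
      proof (intro allI impI)
        fix y assume "\<bar>y - x0\<bar> < \<eta>"
        then have "y \<ge> \<eta>" by (auto simp: \<eta>_def abs_if split: if_split_asm)
        then show "\<bar>- (t^Suc n * exp (-(y*t)))\<bar> \<le> max 1 (fact (Suc n) / \<eta>^Suc n) * min 1 t"
          using pow_exp_min_bound[of t \<eta> y "Suc n"] t \<eta> by simp
      qed
    qed
  qed
  then show ?thesis unfolding F_def by simp
qed

definition "G y = (\<integral>t. 1 - exp (-(y*t)) \<partial>\<nu>)"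

lemma DERIV_G:
  assumes x0: "x0 > 0"
  shows "(G has_real_derivative F 1 x0) (at x0)"
proof -
  define \<eta> where "\<eta> = x0 / 2"
  have \<eta>: "\<eta> > 0" using x0 by (simp add: \<eta>_def)
  have "((\<lambda>y. \<integral>t. 1 - exp (-(y*t)) \<partial>\<nu>) has_real_derivative (\<integral>t. t^1 * exp (-(x0*t)) \<partial>\<nu>)) (at x0)"
  proof (rule DERIV_integral[where \<delta>=\<eta> and W="\<lambda>t. max 1 (fact 1 / \<eta>^1) * min 1 t"])
    show "\<eta> > 0" by (rule \<eta>)
    show "integrable \<nu> (\<lambda>t. 1 - exp (-(y*t)))" if "\<bar>y - x0\<bar> < \<eta>" for y
    proof -
      have "y > 0" using that x0 unfolding \<eta>_def by (auto simp: abs_if split: if_split_asm)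
      then show ?thesis by (intro int_1mexp)
    qed
    show "(\<lambda>t. t^1 * exp (-(x0*t))) \<in> borel_measurable \<nu>" by (intro meas_borel) simp
    show "AE t in \<nu>. \<forall>y. \<bar>y - x0\<bar> < \<eta> \<longrightarrow> ((\<lambda>y. 1 - exp (-(y*t))) has_real_derivative t^1 * exp (-(y*t))) (at y)"
      by (intro AE_I2 allI impI) (auto intro!: derivative_eq_intros simp: algebra_simps)
    show "integrable \<nu> (\<lambda>t. max 1 (fact 1 / \<eta>^1) * min 1 t)" using int_min by simp
    show "AE t in \<nu>. \<forall>y. \<bar>y - x0\<bar> < \<eta> \<longrightarrow> \<bar>t^1 * exp (-(y*t))\<bar> \<le> max 1 (fact 1 / \<eta>^1) * min 1 t"
      using ae_pos
    proof eventually_elim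
      fix t :: real assume t: "t > 0"
      show "\<forall>y. \<bar>y - x0\<bar> < \<eta> \<longrightarrow> \<bar>t^1 * exp (-(y*t))\<bar> \<le> max 1 (fact 1 / \<eta>^1) * min 1 t"
      proof (intro allI impI)
        fix y assume "\<bar>y - x0\<bar> < \<eta>"
        then have "y \<ge> \<eta>" by (auto simp: \<eta>_def abs_if split: if_split_asm)
        then show "\<bar>t^1 * exp (-(y*t))\<bar> \<le> max 1 (fact 1 / \<eta>^1) * min 1 t"
          using pow_exp_min_bound[of t \<eta> y 1] t \<eta> by simp
      qed
    qed
  qed
  then show ?thesis unfolding F_def G_def by simp
qed

lemma deriv_phi:
  assumes eq: "\<And>y. y > 0 \<Longrightarrow> f y = G y"
  shows "y > 0 \<Longrightarrow> (deriv ^^ Suc n) f y = (-1)^n * F (Suc n) y"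
proof (induction n arbitrary: y)
  case 0
  have ev: "eventually (\<lambda>z. f z = G z) (nhds y)"
    using eventually_nhds_in_open[of "{0<..}" y] 0 eq by (auto elim!: eventually_mono)
  have "(deriv ^^ Suc 0) f y = deriv f y" by simp
  also have "\<dots> = deriv G y" by (rule deriv_cong_ev[OF ev refl])
  also have "\<dots> = F 1 y" using DERIV_G[OF 0] by (rule DERIV_imp_deriv)
  finally show ?case by simp
next
  case (Suc n)
  have ev: "eventually (\<lambda>z. (deriv ^^ Suc n) f z = (-1)^n * F (Suc n) z) (nhds y)"
    using eventually_nhds_in_open[of "{0<..}" y] Suc by (auto elim!: eventually_mono)
  have "(deriv ^^ Suc (Suc n)) f y = deriv ((deriv ^^ Suc n) f) y" by simp
  also have "\<dots> = deriv (\<lambda>z. (-1)^n * F (Suc n) z) y" by (rule deriv_cong_ev[OF ev refl])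
  also have "\<dots> = (-1)^n * (- F (Suc (Suc n)) y)"
    by (rule DERIV_imp_deriv, rule DERIV_cmult, rule DERIV_F) (use Suc.prems in auto)
  finally show ?case by simp
qed

end


lemma enn2ereal_fin: "x \<noteq> top \<Longrightarrow> enn2ereal x = ereal (enn2real x)"
  by (metis enn2ereal_eq_top_iff enn2ereal_nonneg ereal_real' real_of_ereal_enn2ereal
      abs_ereal_ge0 ereal_infty_less_eq2(1) ereal_less_eq(1) ereal_less_eq(2))

context levy_meas
begin

definition "Mo n = (\<integral>\<^sup>+ t. ennreal (t^n) \<partial>\<nu>)"

lemma F_nn: assumes "y > 0" "n \<ge> 1"
  shows "ereal (F n y) = enn2ereal (\<integral>\<^sup>+ t. ennreal (t^n * exp (-(y*t))) \<partial>\<nu>)"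
proof -
  have i: "integrable \<nu> (\<lambda>t. t^n * exp (-(y*t)))" by (rule int_F[OF assms])
  have nn: "AE t in \<nu>. 0 \<le> t^n * exp (-(y*t))" using ae_pos by eventually_elim simp
  have "(\<integral>\<^sup>+ t. ennreal (t^n * exp (-(y*t))) \<partial>\<nu>) = ennreal (F n y)"
    unfolding F_def by (rule nn_integral_eq_integral[OF i nn])
  moreover have "F n y \<ge> 0" unfolding F_def using nn by (rule integral_nonneg_AE)
  ultimately show ?thesis by simp
qed

lemma lim_F:
  assumes n: "n \<ge> 1"
  shows "((\<lambda>y. ereal (F n y)) \<longlongrightarrow> enn2ereal (Mo n)) (at_right 0)"
  unfolding tendsto_at_iff_sequentially
proof (intro allI impI)
  fix X :: "nat \<Rightarrow> real" assume X: "\<forall>i. X i \<in> {0<..} - {0}" "X \<longlonglongrightarrow> 0"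
  define N where "N = (\<lambda>i. \<integral>\<^sup>+ t. ennreal (t^n * exp (-(X i*t))) \<partial>\<nu>)"
  have eqN: "ereal (F n (X i)) = enn2ereal (N i)" for i
    unfolding N_def using F_nn[of "X i" n] X(1) n by auto
  have up: "N i \<le> Mo n" for i
    unfolding N_def Mo_def using ae_pos
  proof (intro nn_integral_mono_AE, eventually_elim)
    fix t :: real assume t: "t > 0"
    have "X i > 0" using X(1) by blast
    then have "0 \<le> X i * t" using t by simp
    then have "t^n * exp (-(X i*t)) \<le> t^n * 1" using t by (intro mult_left_mono) auto
    then show "ennreal (t^n * exp (-(X i*t))) \<le> ennreal (t^n)" by (intro ennreal_leI) simp
  qed
  have lim_pt: "(\<lambda>i. ennreal (t^n * exp (-(X i*t)))) \<longlonglongrightarrow> ennreal (t^n)" for t :: real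
  proof -
    have "(\<lambda>i. t^n * exp (-(X i*t))) \<longlonglongrightarrow> t^n * exp (-(0*t))"
      using X(2) by (intro tendsto_intros)
    then show ?thesis by (intro tendsto_ennrealI) simp
  qed
  have "Mo n = (\<integral>\<^sup>+ t. liminf (\<lambda>i. ennreal (t^n * exp (-(X i*t)))) \<partial>\<nu>)"
    unfolding Mo_def by (intro nn_integral_cong) (simp add: lim_imp_Liminf[OF trivial_limit_sequentially lim_pt])
  also have "\<dots> \<le> liminf N"
    unfolding N_def by (rule nn_integral_liminf) (intro meas_borel, simp)
  finally have lo: "Mo n \<le> liminf N" .
  have hi: "limsup N \<le> Mo n" using up by (intro Limsup_bounded) (auto intro!: always_eventually)
  have "liminf N \<le> limsup N" by (rule Liminf_le_Limsup) simp
  then have "liminf N = Mo n" "limsup N = Mo n" using lo hi by auto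
  then have "N \<longlonglongrightarrow> Mo n" by (intro Liminf_eq_Limsup) auto
  then have "(\<lambda>i. enn2ereal (N i)) \<longlonglongrightarrow> enn2ereal (Mo n)" by simp
  then show "((\<lambda>y. ereal (F n y)) \<circ> X) \<longlonglongrightarrow> enn2ereal (Mo n)" by (simp add: o_def eqN)
qed

lemma G_lim0: "(G \<longlongrightarrow> 0) (at_right 0)"
  unfolding tendsto_at_iff_sequentially
proof (intro allI impI)
  fix X :: "nat \<Rightarrow> real" assume X: "\<forall>i. X i \<in> {0<..} - {0}" "X \<longlonglongrightarrow> 0"
  from X(2) obtain N where N: "\<And>i. i \<ge> N \<Longrightarrow> dist (X i) 0 < 1"
    unfolding lim_sequentially by (meson zero_less_one)
  define Y where "Y = (\<lambda>i. X (i + N))"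
  have Y1: "Y i < 1" for i using N[of "i + N"] unfolding Y_def dist_real_def by (simp add: abs_less_iff)
  have Y: "\<And>i. Y i < 1" "\<And>i. Y i > 0" "Y \<longlonglongrightarrow> 0"
    using Y1 X unfolding Y_def
    by (auto intro: LIMSEQ_ignore_initial_segment)
  have "(\<lambda>i. \<integral>t. 1 - exp (-(Y i*t)) \<partial>\<nu>) \<longlonglongrightarrow> (\<integral>t. 0 \<partial>\<nu>)"
  proof (rule integral_dominated_convergence[where w="\<lambda>t. min 1 t"])
    show "(\<lambda>t. 0::real) \<in> borel_measurable \<nu>" by simp
    show "(\<lambda>t. 1 - exp (-(Y i*t))) \<in> borel_measurable \<nu>" for i by (intro meas_borel) simp
    show "integrable \<nu> (\<lambda>t. min 1 t)" by (rule int_min)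
    show "AE t in \<nu>. (\<lambda>i. 1 - exp (-(Y i*t))) \<longlonglongrightarrow> 0"
    proof (intro AE_I2)
      fix t :: real
      have "(\<lambda>i. 1 - exp (-(Y i*t))) \<longlonglongrightarrow> 1 - exp (-(0*t))" using Y(3) by (intro tendsto_intros)
      then show "(\<lambda>i. 1 - exp (-(Y i*t))) \<longlonglongrightarrow> 0" by simp
    qed
    show "AE t in \<nu>. norm (1 - exp (-(Y i*t))) \<le> min 1 t" for i
      using ae_pos
    proof eventually_elim
      fix t :: real assume t: "t > 0"
      have a: "0 \<le> 1 - exp (-(Y i*t))" using Y(2)[of i] t by simp
      have "Y i * t \<le> 1 * t" using Y(1)[of i] t by (intro mult_right_mono) auto
      then have "1 - exp (-(Y i*t)) \<le> 1 - exp (-(1*t))" by simp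
      also have "\<dots> \<le> max 1 1 * min 1 t" by (rule one_minus_exp_le) (use t in auto)
      finally show "norm (1 - exp (-(Y i*t))) \<le> min 1 t" using a by simp
    qed
  qed
  then have "(\<lambda>i. G (X (i + N))) \<longlonglongrightarrow> 0" by (simp add: G_def Y_def)
  then show "(G \<circ> X) \<longlonglongrightarrow> 0" unfolding o_def by (rule LIMSEQ_offset)
qed

lemma d0plus_0:
  assumes eq: "\<And>y. y > 0 \<Longrightarrow> f y = G y"
  shows "deriv_at_0plus f 0 = 0"
proof -
  have ev: "eventually (\<lambda>y. ereal (G y) = ereal ((deriv ^^ 0) f y)) (at_right 0)"
    using eventually_at_right_less[of 0] by eventually_elim (simp add: eq)
  have "((\<lambda>y. ereal (G y)) \<longlongrightarrow> ereal 0) (at_right 0)" using G_lim0 by (rule tendsto_ereal)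
  then have "((\<lambda>y. ereal ((deriv ^^ 0) f y)) \<longlongrightarrow> 0) (at_right 0)"
    using tendsto_cong[OF ev] by (simp add: zero_ereal_def)
  then show ?thesis unfolding deriv_at_0plus_def by (rule tendsto_Lim[rotated]) simp
qed

lemma d0plus_Suc:
  assumes eq: "\<And>y. y > 0 \<Longrightarrow> f y = G y"
  shows "deriv_at_0plus f (Suc n) = ereal ((-1)^n) * enn2ereal (Mo (Suc n))"
proof -
  have ev: "eventually (\<lambda>y. ereal ((-1)^n) * ereal (F (Suc n) y) = ereal ((deriv ^^ Suc n) f y)) (at_right 0)"
    using eventually_at_right_less[of 0]
  proof eventually_elim
    fix y :: real assume y: "y > 0"
    have h: "(deriv ^^ Suc n) f y = (-1)^n * F (Suc n) y" by (rule deriv_phi[OF eq y])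
    show "ereal ((-1)^n) * ereal (F (Suc n) y) = ereal ((deriv ^^ Suc n) f y)" unfolding h by simp
  qed
  have "((\<lambda>y. ereal ((-1)^n) * ereal (F (Suc n) y)) \<longlongrightarrow> ereal ((-1)^n) * enn2ereal (Mo (Suc n))) (at_right 0)"
    by (intro tendsto_cmult_ereal lim_F) auto
  then have "((\<lambda>y. ereal ((deriv ^^ Suc n) f y)) \<longlongrightarrow> ereal ((-1)^n) * enn2ereal (Mo (Suc n))) (at_right 0)"
    using tendsto_cong[OF ev] by simp
  then show ?thesis unfolding deriv_at_0plus_def by (rule tendsto_Lim[rotated]) simp
qed

end


lemma exp_m1_le: "y \<ge> 0 \<Longrightarrow> exp y - 1 \<le> y * exp (y::real)"
proof -
  assume y: "y \<ge> 0"
  have "1 - y \<le> exp (-y)" using exp_ge_add_one_self[of "-y"] by simp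
  then have "(1 - y) * exp y \<le> exp (-y) * exp y" by (intro mult_right_mono) auto
  then show ?thesis by (simp add: exp_minus field_simps)
qed

lemma series_t_exp: fixes t r :: real shows "(\<lambda>n. t^(Suc n) * (r^n / fact n)) sums (t * exp (r*t))"
proof -
  have "(\<lambda>n. (r*t)^n / fact n) sums exp (r*t)" using exp_converges[of "r*t"] by (simp add: divide_inverse mult.commute)
  from sums_mult[OF this, of t] show ?thesis by (simp add: power_mult_distrib field_simps)
qed

lemma series_exp_m1: fixes t s :: real shows "(\<lambda>n. t^(Suc n) * (s^(Suc n) / fact (Suc n))) sums (exp (s*t) - 1)"
proof -
  have "(\<lambda>n. (s*t)^n / fact n) sums exp (s*t)" using exp_converges[of "s*t"] by (simp add: divide_inverse mult.commute)
  then have "(\<lambda>n. (s*t)^(Suc n) / fact (Suc n)) sums (exp (s*t) - 1)"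
    by (subst sums_Suc_iff) simp
  then show ?thesis by (simp add: power_mult_distrib field_simps)
qed

context levy_meas
begin

lemma nn_pow_cmult: "(\<integral>\<^sup>+ t. ennreal (t^(Suc n) * c) \<partial>\<nu>) = ennreal c * Mo (Suc n)" if "c \<ge> 0"
proof -
  have "(\<integral>\<^sup>+ t. ennreal (t^(Suc n) * c) \<partial>\<nu>) = (\<integral>\<^sup>+ t. ennreal c * ennreal (t^(Suc n)) \<partial>\<nu>)"
    using that by (intro nn_integral_cong) (simp add: ennreal_mult' mult.commute)
  also have "\<dots> = ennreal c * Mo (Suc n)" unfolding Mo_def by (rule nn_integral_cmult) (intro meas_borel, simp)
  finally show ?thesis .
qed

lemma K3:
  assumes fin: "\<And>n. Mo (Suc n) \<noteq> top" and r: "r \<ge> 0"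
    and sm: "summable (\<lambda>n. enn2real (Mo (Suc n)) / fact n * r^n)"
  shows "(\<integral>\<^sup>+ t. ennreal (t * exp (r*t)) \<partial>\<nu>) < \<infinity>"
proof -
  have "(\<integral>\<^sup>+ t. ennreal (t * exp (r*t)) \<partial>\<nu>) = (\<integral>\<^sup>+ t. (\<Sum>n. ennreal (t^(Suc n) * (r^n / fact n))) \<partial>\<nu>)"
    using ae_pos
  proof (intro nn_integral_cong_AE, eventually_elim)
    fix t :: real assume t: "t > 0"
    show "ennreal (t * exp (r*t)) = (\<Sum>n. ennreal (t^(Suc n) * (r^n / fact n)))"
      by (rule suminf_ennreal_eq[symmetric, OF _ series_t_exp]) (use t r in simp)
  qed
  also have "\<dots> = (\<Sum>n. \<integral>\<^sup>+ t. ennreal (t^(Suc n) * (r^n / fact n)) \<partial>\<nu>)"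
    by (rule nn_integral_suminf) (intro meas_borel, simp)
  also have "\<dots> = (\<Sum>n. ennreal (enn2real (Mo (Suc n)) / fact n * r^n))"
  proof (intro suminf_cong)
    fix n
    have "(\<integral>\<^sup>+ t. ennreal (t^(Suc n) * (r^n / fact n)) \<partial>\<nu>) = ennreal (r^n / fact n) * Mo (Suc n)"
      using r by (intro nn_pow_cmult) simp
    also have "\<dots> = ennreal (r^n / fact n) * ennreal (enn2real (Mo (Suc n)))"
      using fin[of n] by (simp add: ennreal_enn2real_if)
    also have "\<dots> = ennreal (enn2real (Mo (Suc n)) / fact n * r^n)"
      using r by (simp add: ennreal_mult[symmetric] mult_ac)
    finally show "(\<integral>\<^sup>+ t. ennreal (t^(Suc n) * (r^n / fact n)) \<partial>\<nu>) = ennreal (enn2real (Mo (Suc n)) / fact n * r^n)" .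
  qed
  also have "\<dots> = ennreal (\<Sum>n. enn2real (Mo (Suc n)) / fact n * r^n)"
    by (rule suminf_ennreal2[OF _ sm]) (use r in simp)
  finally show ?thesis by simp
qed

lemma E1:
  assumes fin: "\<And>n. Mo (Suc n) \<noteq> top" and r: "r \<ge> 0"
    and sm: "summable (\<lambda>n. enn2real (Mo (Suc n)) / fact n * r^n)"
  shows "(\<integral>\<^sup>+ t. ennreal (exp (r*t) - 1) \<partial>\<nu>) < \<infinity>"
proof -
  have "(\<integral>\<^sup>+ t. ennreal (exp (r*t) - 1) \<partial>\<nu>) \<le> (\<integral>\<^sup>+ t. ennreal r * ennreal (t * exp (r*t)) \<partial>\<nu>)"
    using ae_pos
  proof (intro nn_integral_mono_AE, eventually_elim)
    fix t :: real assume t: "t > 0"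
    have "exp (r*t) - 1 \<le> (r*t) * exp (r*t)" using r t by (intro exp_m1_le) simp
    then show "ennreal (exp (r*t) - 1) \<le> ennreal r * ennreal (t * exp (r*t))"
      using r t by (simp add: ennreal_mult[symmetric] mult_ac ennreal_leI)
  qed
  also have "\<dots> = ennreal r * (\<integral>\<^sup>+ t. ennreal (t * exp (r*t)) \<partial>\<nu>)"
    by (rule nn_integral_cmult) (intro meas_borel, simp)
  also have "\<dots> < \<infinity>" using K3[OF fin r sm] by (simp add: ennreal_mult_less_top)
  finally show ?thesis .
qed

end


lemma neg_pow_identity: "(-1::real)^n * (-s)^(Suc n) = -(s^(Suc n))"
  by (induction n) (auto simp: algebra_simps)

context levy_meas
begin

lemma E2:
  assumes s: "s \<ge> 0" and e1: "(\<integral>\<^sup>+ t. ennreal (exp (s*t) - 1) \<partial>\<nu>) < \<infinity>"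
  shows "(\<integral>\<^sup>+ t. ennreal (exp (s*t) * min 1 t) \<partial>\<nu>) < \<infinity>"
proof -
  have "(\<integral>\<^sup>+ t. ennreal (exp (s*t) * min 1 t) \<partial>\<nu>) \<le> (\<integral>\<^sup>+ t. ennreal (min 1 t) + ennreal (exp (s*t) - 1) \<partial>\<nu>)"
    using ae_pos
  proof (intro nn_integral_mono_AE, eventually_elim)
    fix t :: real assume t: "t > 0"
    have e1: "exp (s*t) \<ge> 1" using s t by simp
    have "exp (s*t) * min 1 t \<le> min 1 t + (exp (s*t) - 1)"
    proof (cases "t \<le> 1")
      case True
      have "t * (exp (s*t) - 1) \<le> 1 * (exp (s*t) - 1)" using True e1 by (intro mult_right_mono) auto
      then show ?thesis using True by (simp add: algebra_simps)
    next
      case False then show ?thesis by simp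
    qed
    then show "ennreal (exp (s*t) * min 1 t) \<le> ennreal (min 1 t) + ennreal (exp (s*t) - 1)"
      using t e1 by (simp add: ennreal_plus[symmetric] ennreal_leI del: ennreal_plus)
  qed
  also have "\<dots> = (\<integral>\<^sup>+ t. ennreal (min 1 t) \<partial>\<nu>) + (\<integral>\<^sup>+ t. ennreal (exp (s*t) - 1) \<partial>\<nu>)"
    by (rule nn_integral_add) (intro meas_borel, simp)+
  also have "\<dots> < \<infinity>" using fin e1 by simp
  finally show ?thesis .
qed

lemma E3:
  assumes c0: "deriv_at_0plus f 0 = 0"
    and cS: "\<And>n. deriv_at_0plus f (Suc n) = ereal ((-1)^n) * enn2ereal (Mo (Suc n))"
    and fin: "\<And>n. Mo (Suc n) \<noteq> top" and s: "s \<ge> 0"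
    and e1: "(\<integral>\<^sup>+ t. ennreal (exp (s*t) - 1) \<partial>\<nu>) < \<infinity>"
  shows "integrable \<nu> (\<lambda>t. 1 - exp (s*t))"
    "(\<Sum>n. real_of_ereal (deriv_at_0plus f n) / fact n * (-s)^n) = (\<integral>t. 1 - exp (s*t) \<partial>\<nu>)"
proof -
  define a where "a n = enn2real (Mo (Suc n)) * (s^(Suc n) / fact (Suc n))" for n
  have a_nn: "a n \<ge> 0" for n unfolding a_def using s by simp
  have A: "(\<integral>\<^sup>+ t. ennreal (exp (s*t) - 1) \<partial>\<nu>) = (\<Sum>n. ennreal (a n))"
  proof -
    have "(\<integral>\<^sup>+ t. ennreal (exp (s*t) - 1) \<partial>\<nu>) = (\<integral>\<^sup>+ t. (\<Sum>n. ennreal (t^(Suc n) * (s^(Suc n) / fact (Suc n)))) \<partial>\<nu>)"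
      using ae_pos
    proof (intro nn_integral_cong_AE, eventually_elim)
      fix t :: real assume t: "t > 0"
      show "ennreal (exp (s*t) - 1) = (\<Sum>n. ennreal (t^(Suc n) * (s^(Suc n) / fact (Suc n))))"
        by (rule suminf_ennreal_eq[symmetric, OF _ series_exp_m1]) (use t s in simp)
    qed
    also have "\<dots> = (\<Sum>n. \<integral>\<^sup>+ t. ennreal (t^(Suc n) * (s^(Suc n) / fact (Suc n))) \<partial>\<nu>)"
      by (rule nn_integral_suminf) (intro meas_borel, simp)
    also have "\<dots> = (\<Sum>n. ennreal (a n))"
    proof (intro suminf_cong)
      fix n
      have "(\<integral>\<^sup>+ t. ennreal (t^(Suc n) * (s^(Suc n) / fact (Suc n))) \<partial>\<nu>) = ennreal (s^(Suc n) / fact (Suc n)) * Mo (Suc n)"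
        using s by (intro nn_pow_cmult) simp
      also have "\<dots> = ennreal (s^(Suc n) / fact (Suc n)) * ennreal (enn2real (Mo (Suc n)))"
        using fin[of n] by (simp add: ennreal_enn2real_if)
      also have "\<dots> = ennreal (a n)"
        using s by (simp add: a_def ennreal_mult[symmetric] mult_ac)
      finally show "(\<integral>\<^sup>+ t. ennreal (t^(Suc n) * (s^(Suc n) / fact (Suc n))) \<partial>\<nu>) = ennreal (a n)" .
    qed
    finally show ?thesis .
  qed
  have sa: "summable a" using A e1 a_nn by (intro summable_suminf_not_top) auto
  have A2: "(\<integral>\<^sup>+ t. ennreal (exp (s*t) - 1) \<partial>\<nu>) = ennreal (suminf a)"
    using A suminf_ennreal2[OF a_nn sa] by simp
  have mes: "(\<lambda>t. exp (s*t) - 1) \<in> borel_measurable \<nu>" by (intro meas_borel) simp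
  have nn: "AE t in \<nu>. 0 \<le> exp (s*t) - 1" using ae_pos by eventually_elim (use s in simp)
  have i: "integrable \<nu> (\<lambda>t. exp (s*t) - 1)" by (rule integrableI_nonneg[OF mes nn e1])
  show "integrable \<nu> (\<lambda>t. 1 - exp (s*t))" using integrable_minus[OF i] by simp
  have "(\<integral>t. 1 - exp (s*t) \<partial>\<nu>) = - (\<integral>t. exp (s*t) - 1 \<partial>\<nu>)"
    using integral_minus[of \<nu> "\<lambda>t. exp (s*t) - 1"] by simp
  also have "(\<integral>t. exp (s*t) - 1 \<partial>\<nu>) = enn2real (\<integral>\<^sup>+ t. ennreal (exp (s*t) - 1) \<partial>\<nu>)"
    by (rule integral_eq_nn_integral[OF mes nn])
  also have "\<dots> = suminf a" using A2 sa a_nn by (simp add: suminf_nonneg)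
  finally have I: "(\<integral>t. 1 - exp (s*t) \<partial>\<nu>) = - suminf a" .
  define trm where "trm n = real_of_ereal (deriv_at_0plus f n) / fact n * (-s)^n" for n
  have tS: "trm (Suc n) = - a n" for n
  proof -
    have "real_of_ereal (deriv_at_0plus f (Suc n)) = (-1)^n * enn2real (Mo (Suc n))"
      unfolding cS using enn2ereal_fin[OF fin[of n]] by simp
    then have "trm (Suc n) = enn2real (Mo (Suc n)) / fact (Suc n) * ((-1)^n * (-s)^(Suc n))"
      unfolding trm_def by (simp add: mult_ac)
    also have "\<dots> = - a n" unfolding neg_pow_identity a_def by simp
    finally show ?thesis .
  qed
  have t0: "trm 0 = 0" unfolding trm_def c0 by simp
  have "(\<lambda>n. trm (Suc n)) sums (- suminf a)" unfolding tS by (intro sums_minus summable_sums sa)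
  then have "trm sums (- suminf a)" by (subst (asm) sums_Suc_iff) (simp add: t0)
  then show "(\<Sum>n. real_of_ereal (deriv_at_0plus f n) / fact n * (-s)^n) = (\<integral>t. 1 - exp (s*t) \<partial>\<nu>)"
    unfolding I trm_def[symmetric] by (rule sums_unique[symmetric])
qed

end


lemma dshift: "deriv_at_0plus (deriv f) n = deriv_at_0plus f (Suc n)"
  unfolding deriv_at_0plus_def by (simp only: funpow_Suc_right o_def)

lemma phi_repr:
  fixes \<phi> :: "real \<Rightarrow> real" and \<mu> :: "real measure" and \<beta> :: ereal and x :: real
  assumes "bernstein \<phi>" "levy_triple \<phi> 0 0 \<mu>" "\<beta> = - omega0 (deriv \<phi>)" "- \<beta> < ereal x"
  shows "integrable \<mu> (\<lambda>t. 1 - exp (-(x*t)))" "phi_ext \<phi> x = (\<integral>t. 1 - exp (-(x*t)) \<partial>\<mu>)"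
    "(\<integral>\<^sup>+ t. ennreal (exp (-(x*t)) * min 1 t) \<partial>\<mu>) < \<infinity>"
proof -
  interpret levy_meas \<mu> by (rule levy_triple_meas[OF assms(2)])
  have eq: "\<phi> y = G y" if "y > 0" for y
    using levy_triple_eq[OF assms(2) that] by (simp add: G_def)
  have "(integrable \<mu> (\<lambda>t. 1 - exp (-(x*t)))) \<and> (phi_ext \<phi> x = (\<integral>t. 1 - exp (-(x*t)) \<partial>\<mu>)) \<and>
    ((\<integral>\<^sup>+ t. ennreal (exp (-(x*t)) * min 1 t) \<partial>\<mu>) < \<infinity>)"
  proof (cases "x > 0")
    case True
    have "(\<integral>\<^sup>+ t. ennreal (exp (-(x*t)) * min 1 t) \<partial>\<mu>) \<le> (\<integral>\<^sup>+ t. ennreal (min 1 t) \<partial>\<mu>)"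
      using ae_pos
    proof (intro nn_integral_mono_AE, eventually_elim)
      fix t :: real assume t: "t > 0"
      have "exp (-(x*t)) * min 1 t \<le> 1 * min 1 t" using True t by (intro mult_right_mono) auto
      then show "ennreal (exp (-(x*t)) * min 1 t) \<le> ennreal (min 1 t)" by (intro ennreal_leI) simp
    qed
    then have "(\<integral>\<^sup>+ t. ennreal (exp (-(x*t)) * min 1 t) \<partial>\<mu>) < \<infinity>" using fin by (rule le_less_trans)
    moreover have "integrable \<mu> (\<lambda>t. 1 - exp (-(x*t)))" by (rule int_1mexp[OF True])
    moreover have "phi_ext \<phi> x = (\<integral>t. 1 - exp (-(x*t)) \<partial>\<mu>)"
      using eq[OF True] True by (simp add: phi_ext_def G_def)
    ultimately show ?thesis by blast
  next
    case False
    define s where "s = -x"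
    have s: "s \<ge> 0" using False by (simp add: s_def)
    have xs: "x = -s" by (simp add: s_def)
    have om: "omega0 (deriv \<phi>) < ereal (-s)"
      using assms(3,4) xs by (cases "omega0 (deriv \<phi>)") auto
    then have omneg: "omega0 (deriv \<phi>) \<noteq> 0" using s by (auto simp: zero_ereal_def)
    have C: "\<forall>n. \<bar>deriv_at_0plus (deriv \<phi>) n\<bar> \<noteq> \<infinity>"
      using omneg unfolding omega0_def by (auto split: if_splits)
    then have omI: "omega0 (deriv \<phi>) = Inf {ereal l | l. summable (\<lambda>n. real_of_ereal (deriv_at_0plus (deriv \<phi>) n) / fact n * l ^ n)}"
      unfolding omega0_def by simp
    have cS: "deriv_at_0plus \<phi> (Suc n) = ereal ((-1)^n) * enn2ereal (Mo (Suc n))" for n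
      by (rule d0plus_Suc[OF eq])
    have fin': "Mo (Suc n) \<noteq> top" for n
    proof
      assume "Mo (Suc n) = top"
      then have "\<bar>deriv_at_0plus (deriv \<phi>) n\<bar> = \<infinity>" unfolding dshift cS by simp
      then show False using spec[OF C, of n] by simp
    qed
    have dval: "real_of_ereal (deriv_at_0plus (deriv \<phi>) n) = (-1)^n * enn2real (Mo (Suc n))" for n
      unfolding dshift cS using enn2ereal_fin[OF fin'[of n]] by simp
    obtain z where z: "z \<in> {ereal l | l. summable (\<lambda>n. real_of_ereal (deriv_at_0plus (deriv \<phi>) n) / fact n * l ^ n)}"
      "z < ereal (-s)"
      using om unfolding omI by (auto simp: Inf_less_iff)
    then obtain l where l: "summable (\<lambda>n. real_of_ereal (deriv_at_0plus (deriv \<phi>) n) / fact n * l ^ n)" "l < -s"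
      by auto
    have "summable (\<lambda>n. norm (real_of_ereal (deriv_at_0plus (deriv \<phi>) n) / fact n * s ^ n))"
      by (rule powser_insidea[OF l(1)]) (use l(2) s in auto)
    then have sm: "summable (\<lambda>n. enn2real (Mo (Suc n)) / fact n * s^n)"
      unfolding dval using s by (simp add: abs_mult power_abs)
    have e1: "(\<integral>\<^sup>+ t. ennreal (exp (s*t) - 1) \<partial>\<mu>) < \<infinity>" by (rule E1[OF fin' s sm])
    have E3a: "integrable \<mu> (\<lambda>t. 1 - exp (s*t))"
      and E3b: "(\<Sum>n. real_of_ereal (deriv_at_0plus \<phi> n) / fact n * (-s)^n) = (\<integral>t. 1 - exp (s*t) \<partial>\<mu>)"
      using E3[OF d0plus_0[OF eq] cS fin' s e1] by auto
    have "exp (-(x*t)) = exp (s*t)" for t by (simp add: xs)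
    then show ?thesis using E3a E3b E2[OF s e1] False xs by (simp add: phi_ext_def)
  qed
  then show "integrable \<mu> (\<lambda>t. 1 - exp (-(x*t)))" "phi_ext \<phi> x = (\<integral>t. 1 - exp (-(x*t)) \<partial>\<mu>)"
    "(\<integral>\<^sup>+ t. ennreal (exp (-(x*t)) * min 1 t) \<partial>\<mu>) < \<infinity>" by blast+
qed

lemma cm_cont:
  assumes "completely_monotone m" shows "continuous_on {0<..} m"
proof (rule continuous_at_imp_continuous_on, rule ballI)
  fix x :: real assume "x \<in> {0<..}"
  have H: "\<forall>n x. 0 < x \<longrightarrow> (deriv ^^ n) m differentiable at x"
    using assms unfolding completely_monotone_def smooth_pos_def by blast
  have "(deriv ^^ 0) m differentiable at x" using H[rule_format, of x 0] \<open>x \<in> {0<..}\<close> by simp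
  then have "m differentiable at x" by simp
  then show "isCont m x" using differentiable_imp_continuous_within by auto
qed

theorem lemma4p2:
  fixes \<phi> :: "real \<Rightarrow> real" and \<mu> :: "real measure" and \<beta> :: ereal
  assumes "bernstein \<phi>"
    and "levy_triple \<phi> 0 0 \<mu>"
    and "\<beta> = - omega0 (deriv \<phi>)"
    and "\<forall>a::real. - \<beta> < ereal a \<longrightarrow>
           complete_bernstein (\<lambda>l. phi_ext \<phi> (l + a) - phi_ext \<phi> a)"
  shows "\<exists>g. has_density_on_pos \<mu> g \<and>
           (\<beta> \<noteq> \<infinity> \<longrightarrow> completely_monotone (\<lambda>t. exp (real_of_ereal \<beta> * t) * g t)) \<and>
           (\<beta> = \<infinity> \<longrightarrow> (\<forall>c::real. completely_monotone (\<lambda>t. exp (c * t) * g t)))"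
proof -
  note B = assms(1) assms(2) assms(3)
  have L: "levy_meas \<mu>" by (rule levy_triple_meas[OF assms(2)])
  have b0: "\<beta> \<ge> 0" using omega0_le0[of "deriv \<phi>"] assms(3) by (simp add: ereal_uminus_le_reorder)
  have key: "\<exists>m. completely_monotone m \<and> m \<in> borel_measurable borel \<and> (\<forall>t>0. m t \<ge> 0) \<and>
       \<mu> = density lborel (\<lambda>t. ennreal (indicator {0<..} t * (exp (a*t) * m t)))"
    if a: "- \<beta> < ereal a" for a
  proof -
    have la: "- \<beta> < ereal (l + a)" if "l > 0" for l
      using a that by (cases \<beta>) auto
    obtain m where "completely_monotone m" "m \<in> borel_measurable borel" "\<And>t. t > 0 \<Longrightarrow> m t \<ge> 0"
      "\<mu> = density lborel (\<lambda>t. ennreal (indicator {0<..} t * (exp (a*t) * m t)))"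
    proof (rule density_from_cbf[OF L])
      show "\<And>l. l > 0 \<Longrightarrow> integrable \<mu> (\<lambda>t. 1 - exp (-((l+a)*t)))" using phi_repr(1)[OF B la] .
      show "integrable \<mu> (\<lambda>t. 1 - exp (-(a*t)))" using phi_repr(1)[OF B a] .
      show "\<And>l. l > 0 \<Longrightarrow> phi_ext \<phi> (l+a) = (\<integral>t. 1 - exp (-((l+a)*t)) \<partial>\<mu>)" using phi_repr(2)[OF B la] .
      show "phi_ext \<phi> a = (\<integral>t. 1 - exp (-(a*t)) \<partial>\<mu>)" using phi_repr(2)[OF B a] .
      show "(\<integral>\<^sup>+ t. ennreal (exp (-(a*t)) * min 1 t) \<partial>\<mu>) < \<infinity>" using phi_repr(3)[OF B a] .
      show "complete_bernstein (\<lambda>l. phi_ext \<phi> (l + a) - phi_ext \<phi> a)" using assms(4) a by blast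
    qed blast
    then show ?thesis by blast
  qed
  have one: "- \<beta> < ereal 1" using b0 by (cases \<beta>) auto
  obtain m1 where m1: "completely_monotone m1" "m1 \<in> borel_measurable borel" "\<forall>t>0. m1 t \<ge> 0"
     "\<mu> = density lborel (\<lambda>t. ennreal (indicator {0<..} t * (exp (1*t) * m1 t)))"
    using key[OF one] by blast
  define g where "g = (\<lambda>t. exp t * m1 t)"
  have gm: "g \<in> borel_measurable borel" unfolding g_def using m1(2) by measurable
  have gd: "\<mu> = density lborel (\<lambda>t. ennreal (indicator {0<..} t * g t))"
    using m1(4) by (simp add: g_def)
  have hd: "has_density_on_pos \<mu> g"
    unfolding has_density_on_pos_def using gm gd m1(3) by (auto simp: g_def)
  have gc: "continuous_on {0<..} g" unfolding g_def using cm_cont[OF m1(1)] by (intro continuous_intros)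
  have cma: "completely_monotone (\<lambda>t. exp ((-a)*t) * g t)" if a: "- \<beta> < ereal a" for a
  proof -
    obtain m where m: "completely_monotone m" "m \<in> borel_measurable borel" "\<forall>t>0. m t \<ge> 0"
     "\<mu> = density lborel (\<lambda>t. ennreal (indicator {0<..} t * (exp (a*t) * m t)))"
      using key[OF a] by blast
    have "density lborel (\<lambda>t. ennreal (indicator {0<..} t * (exp (a*t) * m t))) = density lborel (\<lambda>t. ennreal (indicator {0<..} t * g t))"
      using m(4) gd by simp
    then have "AE t in lborel. ennreal (indicator {0<..} t * (exp (a*t) * m t)) = ennreal (indicator {0<..} t * g t)"
      using m(2) gm by (subst (asm) sigma_finite_measure.density_unique_iff[OF sigma_finite_lborel]) auto
    then have ae: "AE t in lborel. t > 0 \<longrightarrow> exp (a*t) * m t = g t"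
    proof eventually_elim
      fix t :: real assume "ennreal (indicator {0<..} t * (exp (a*t) * m t)) = ennreal (indicator {0<..} t * g t)"
      moreover have "t > 0 \<Longrightarrow> 0 \<le> g t" using m1(3) by (simp add: g_def)
      ultimately show "t > 0 \<longrightarrow> exp (a*t) * m t = g t" using m(3) by auto
    qed
    have ee: "exp (a*t) * m t = g t" if "t > 0" for t
      by (rule ae_eq_cont[OF _ gc ae that]) (use cm_cont[OF m(1)] in \<open>intro continuous_intros\<close>)
    have eqm: "m t = exp ((-a)*t) * g t" if "t > 0" for t
    proof -
      have "exp ((-a)*t) * (exp (a*t) * m t) = m t" by (simp add: mult.assoc[symmetric] exp_add[symmetric])
      then show ?thesis using ee[OF that] by simp
    qed
    show ?thesis by (rule cm_cong[OF eqm m(1)])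
  qed
  show ?thesis
  proof (intro exI conjI impI allI)
    show "has_density_on_pos \<mu> g" by (rule hd)
  next
    fix c :: real assume inf: "\<beta> = \<infinity>"
    have "- \<beta> < ereal (-c)" using inf by simp
    from cma[OF this] show "completely_monotone (\<lambda>t. exp (c*t) * g t)" by simp
  next
    assume fin: "\<beta> \<noteq> \<infinity>"
    then obtain Bv where Bv: "\<beta> = ereal Bv" "Bv \<ge> 0" using b0 by (cases \<beta>) auto
    define G where "G = (\<lambda>t. exp (Bv*t) * g t)"
    have smG: "smooth_pos G"
    proof -
      have "smooth_pos (\<lambda>t. exp ((Bv+1)*t) * m1 t)"
        using smooth_pos_exp_mult m1(1) unfolding completely_monotone_def by blast
      moreover have "exp ((Bv+1)*t) * m1 t = G t" for t
        by (simp add: G_def g_def algebra_simps exp_add)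
      ultimately show ?thesis by simp
    qed
    have "completely_monotone G"
    proof (rule cm_limit[OF smG zero_less_one])
      fix e :: real assume e: "0 < e" "e < 1"
      have "- \<beta> < ereal (e - Bv)" using Bv e by simp
      from cma[OF this] have "completely_monotone (\<lambda>t. exp ((Bv - e)*t) * g t)" by simp
      moreover have "exp ((Bv - e)*t) * g t = exp ((-e)*t) * G t" for t
        by (simp add: G_def algebra_simps exp_add[symmetric] exp_diff)
      ultimately show "completely_monotone (\<lambda>t. exp ((-e)*t) * G t)" by simp
    qed
    then show "completely_monotone (\<lambda>t. exp (real_of_ereal \<beta> * t) * g t)"
      using Bv by (simp add: G_def)
  qed
qed


end
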